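(* Let $(\mathfrak g,[\cdot,\cdot],J,\omega_0)$ be a hermitian Lie algebra with Chern-Ricci operator $P_0$, and let $\mu(t)$ be the bracket flow solution starting at $[\cdot,\cdot]$, defined on the maximal interval $(T_-,T_+)$. For a choice of sign $\pm$, suppose $T_\pm=\pm\infty$ and $\mu(t)\to\lambda$ as $t\to\pm\infty$. Then the hermitian Lie algebra $(\mathfrak g,\lambda,J,\omega_0)$ is Chern-Ricci flat, i.e. its Chern-Ricci operator $P_\lambda$ vanishes.
   Context: A hermitian Lie algebra $(\mathfrak g,\mu,J,\omega)$: a real Lie bracket $\mu$ on the vector space $\mathfrak g$, $J$ with $J^2=-I$ integrable ($\mu(JX,JY)=\mu(X,Y)+J\mu(JX,Y)+J\mu(X,JY)$), and a nondegenerate 2-form $\omega$ with $\omega(J\cdot,J\cdot)=\omega$ and $g=\omega(\cdot,J\cdot)$ positive definite. Chern-Ricci form: $p(X,Y)=-\tfrac12\operatorname{tr}(J\,\mathrm{ad}_{\mu}{\mu(X,Y)})+\tfrac12\operatorname{tr}(\mathrm{ad}_\mu{J\mu(X,Y)})$; Chern-Ricci operator $P_\mu$ defined by $p=\omega(P_\mu\cdot,\cdot)$. With $J,\omega_0$ fixed, the bracket flow is the ODE $\frac{d}{dt}\mu=\delta_\mu(P_\mu)$, $\mu(0)=[\cdot,\cdot]$, where $P_\mu$ is the Chern-Ricci operator of $(\mathfrak g,\mu,J,\omega_0)$ and $\delta_\mu(A)=\mu(A\cdot,\cdot)+\mu(\cdot,A\cdot)-A\mu(\cdot,\cdot)$.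 Its solution is $\mu(t)=h(t)\cdot[\cdot,\cdot]$ with $h(t)=(I-2tP_0)^{1/2}$, where $h\cdot\mu=h\mu(h^{-1}\cdot,h^{-1}\cdot)$; it is defined on $(T_-,T_+)$, where $T_+=\infty$ if $P_0\le0$ and $T_+=1/(2p_+)$ otherwise ($p_+$ the maximal positive eigenvalue of $P_0$), and $T_-=-\infty$ if $P_0\ge0$ and $T_-=1/(2p_-)$ otherwise ($p_-$ the minimal negative eigenvalue of $P_0$). Statements with $\pm$ are two separate statements, one for each sign. *)

theory Defs
  imports "HOL-Analysis.Analysis"
begin

text \<open>The Lie algebra g is modelled as real^'n ('n a finite index type), a bracket as a
  function mu :: real^'n => real^'n => real^'n, J as a function real^'n => real^'n and
  omega as a function real^'n => real^'n => real.\<close>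

type_synonym 'n brkt = "real^'n \<Rightarrow> real^'n \<Rightarrow> real^'n"

definition lie_bracket :: "'n::finite brkt \<Rightarrow> bool" where
  "lie_bracket mu \<longleftrightarrow> bilinear mu \<and> (\<forall>X Y. mu X Y = - mu Y X) \<and>
     (\<forall>X Y Z. mu X (mu Y Z) + mu Y (mu Z X) + mu Z (mu X Y) = 0)"

definition hermitian_lie_algebra ::
  "'n::finite brkt \<Rightarrow> (real^'n \<Rightarrow> real^'n) \<Rightarrow> (real^'n \<Rightarrow> real^'n \<Rightarrow> real) \<Rightarrow> bool" where
  "hermitian_lie_algebra mu J om \<longleftrightarrow>
     lie_bracket mu \<and> linear J \<and> (\<forall>X. J (J X) = - X) \<and>
     (\<forall>X Y. mu (J X) (J Y) = mu X Y + J (mu (J X) Y) + J (mu X (J Y))) \<and>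
     bilinear om \<and> (\<forall>X Y. om X Y = - om Y X) \<and>
     (\<forall>X. (\<forall>Y. om X Y = 0) \<longrightarrow> X = 0) \<and>
     (\<forall>X Y. om (J X) (J Y) = om X Y) \<and>
     (\<forall>X. X \<noteq> 0 \<longrightarrow> om X (J X) > 0)"

definition ad :: "'n::finite brkt \<Rightarrow> real^'n \<Rightarrow> real^'n^'n" where
  "ad mu Z = matrix (\<lambda>X. mu Z X)"

definition chern_ricci_form ::
  "'n::finite brkt \<Rightarrow> (real^'n \<Rightarrow> real^'n) \<Rightarrow> real^'n \<Rightarrow> real^'n \<Rightarrow> real" where
  "chern_ricci_form mu J X Y =
     - (1/2) * trace (matrix J ** ad mu (mu X Y)) + (1/2) * trace (ad mu (J (mu X Y)))"

definition chern_ricci_op ::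
  "'n::finite brkt \<Rightarrow> (real^'n \<Rightarrow> real^'n) \<Rightarrow> (real^'n \<Rightarrow> real^'n \<Rightarrow> real) \<Rightarrow> real^'n \<Rightarrow> real^'n" where
  "chern_ricci_op mu J om X = (THE Z. \<forall>Y. om Z Y = chern_ricci_form mu J X Y)"

definition delta :: "'n::finite brkt \<Rightarrow> (real^'n \<Rightarrow> real^'n) \<Rightarrow> 'n brkt" where
  "delta mu A X Y = mu (A X) Y + mu X (A Y) - A (mu X Y)"

end

theory Submission
  imports Defs
begin


definition tr :: "(real^'n::finite \<Rightarrow> real^'n) \<Rightarrow> real" where
  "tr f = (\<Sum>i\<in>UNIV. f (axis i 1) $ i)"

lemma vec_expand: "(x::real^'n::finite) = (\<Sum>i\<in>UNIV. x$i *\<^sub>R axis i 1)"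
  using basis_expansion[of x] by (simp add: scalar_mult_eq_scaleR)

lemma bil_expand:
  assumes "bilinear f"
  shows "f X Y = (\<Sum>i\<in>UNIV. \<Sum>j\<in>UNIV. (X$i * Y$j) *\<^sub>R f (axis i 1) (axis j 1))"
proof -
  have "f X Y = f (\<Sum>i\<in>UNIV. X$i *\<^sub>R axis i 1) (\<Sum>j\<in>UNIV. Y$j *\<^sub>R axis j 1)"
    by (metis vec_expand)
  also have "\<dots> = (\<Sum>i\<in>UNIV. \<Sum>j\<in>UNIV. f (X$i *\<^sub>R axis i 1) (Y$j *\<^sub>R axis j 1))"
    by (simp add: bilinear_sum[OF assms] sum.cartesian_product)
  also have "\<dots> = (\<Sum>i\<in>UNIV. \<Sum>j\<in>UNIV. (X$i * Y$j) *\<^sub>R f (axis i 1) (axis j 1))"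
    by (simp add: bilinear_lmul[OF assms] bilinear_rmul[OF assms] mult.commute)
  finally show ?thesis .
qed

lemma lin_expand:
  assumes "linear f"
  shows "f X = (\<Sum>i\<in>UNIV. X$i *\<^sub>R f (axis i 1))"
proof -
  have "f X = f (\<Sum>i\<in>UNIV. X$i *\<^sub>R axis i 1)" by (metis vec_expand)
  also have "\<dots> = (\<Sum>i\<in>UNIV. X$i *\<^sub>R f (axis i 1))"
    by (simp add: linear_sum[OF assms] linear_scale[OF assms])
  finally show ?thesis .
qed

lemma tr_matrix: "tr f = trace (matrix f)"
  by (simp add: tr_def trace_def matrix_def)

lemma trace_ad: "trace (ad mu Z) = tr (mu Z)"
  by (simp add: ad_def tr_matrix)

lemma trace_Jad:
  assumes "linear J"
  shows "trace (matrix J ** ad mu Z) = tr (\<lambda>x. J (mu Z x))"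
proof -
  have "(matrix J ** ad mu Z) $ i $ i = J (mu Z (axis i 1)) $ i" for i
    using lin_expand[OF assms, of "mu Z (axis i 1)"]
    by (simp add: matrix_matrix_mult_def ad_def matrix_def sum_component mult.commute)
  then show ?thesis by (simp add: trace_def tr_def)
qed

lemma tr_comm:
  assumes "linear f" "linear g"
  shows "tr (\<lambda>x. f (g x)) = tr (\<lambda>x. g (f x))"
proof -
  have "tr (\<lambda>x. f (g x)) = trace (matrix f ** matrix g)"
    using matrix_compose[OF assms(2,1)] by (simp add: tr_matrix o_def)
  also have "\<dots> = trace (matrix g ** matrix f)" by (rule trace_mul_sym)
  also have "\<dots> = tr (\<lambda>x. g (f x))"
    using matrix_compose[OF assms(1,2)] by (simp add: tr_matrix o_def)
  finally show ?thesis .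
qed

lemma tr_add: "tr (\<lambda>x. f x + g x) = tr f + tr g"
  by (simp add: tr_def sum.distrib)
lemma tr_diff: "tr (\<lambda>x. f x - g x) = tr f - tr g"
  by (simp add: tr_def sum_subtractf)
lemma tr_scale: "tr (\<lambda>x. c *\<^sub>R f x) = c * tr f"
  by (simp add: tr_def sum_distrib_left)
lemma tr_neg: "tr (\<lambda>x. - f x) = - tr f"
  by (simp add: tr_def sum_negf)
lemma tr_sum: "tr (\<lambda>x. \<Sum>k\<in>K. f k x) = (\<Sum>k\<in>K. tr (f k))"
  by (simp add: tr_def sum_component sum.swap[of _ UNIV K])
lemma tr_zero: "tr (\<lambda>x. 0) = 0"
  by (simp add: tr_def)

definition phi :: "'n::finite brkt \<Rightarrow> (real^'n \<Rightarrow> real^'n) \<Rightarrow> real^'n \<Rightarrow> real" where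
  "phi mu J Z = -(1/2) * tr (\<lambda>x. J (mu Z x)) + (1/2) * tr (mu (J Z))"

lemma crf_phi: "linear J \<Longrightarrow> chern_ricci_form mu J X Y = phi mu J (mu X Y)"
  by (simp add: chern_ricci_form_def phi_def trace_Jad trace_ad)

lemma bil_fun_add: "bilinear mu \<Longrightarrow> mu (a + b) = (\<lambda>x. mu a x + mu b x)"
  by (rule ext) (simp add: bilinear_ladd)
lemma bil_fun_scale: "bilinear mu \<Longrightarrow> mu (c *\<^sub>R a) = (\<lambda>x. c *\<^sub>R mu a x)"
  by (rule ext) (simp add: bilinear_lmul)
lemma bil_lin1: "bilinear mu \<Longrightarrow> linear (\<lambda>x. mu x y)"
  by (simp add: bilinear_def)
lemma bil_lin2: "bilinear mu \<Longrightarrow> linear (\<lambda>y. mu x y)"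
  by (simp add: bilinear_def)

lemma phi_linear:
  assumes "bilinear mu" "linear J"
  shows "linear (phi mu J)"
proof (rule linearI)
  fix a b
  show "phi mu J (a + b) = phi mu J a + phi mu J b"
    by (simp add: phi_def bil_fun_add[OF assms(1)] linear_add[OF assms(2)] tr_add algebra_simps)
next
  fix c a
  show "phi mu J (c *\<^sub>R a) = c *\<^sub>R phi mu J a"
    by (simp add: phi_def bil_fun_scale[OF assms(1)] linear_scale[OF assms(2)] tr_scale algebra_simps)
qed

definition omok :: "(real^'n::finite \<Rightarrow> real^'n \<Rightarrow> real) \<Rightarrow> bool" where
  "omok om \<longleftrightarrow> bilinear om \<and> (\<forall>X. (\<forall>Y. om X Y = 0) \<longrightarrow> X = 0)"

lemma dual_exists:
  fixes om :: "real^'n::finite \<Rightarrow> real^'n \<Rightarrow> real"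
  assumes "omok om"
  shows "\<exists>w. \<forall>Y. om w Y = Y $ j"
proof -
  have bo: "bilinear om" and nd: "\<And>X. (\<forall>Y. om X Y = 0) \<Longrightarrow> X = 0" using assms by (auto simp: omok_def)
  define F where "F Z = (\<chi> k. om Z (axis k 1))" for Z :: "real^'n"
  have lF: "linear F"
    by (rule linearI) (simp_all add: F_def vec_eq_iff bilinear_ladd[OF bo] bilinear_lmul[OF bo])
  have "inj F"
  proof (rule linear_injective_0[OF lF, THEN iffD2], intro allI impI)
    fix Z assume "F Z = 0"
    then have "\<forall>k. om Z (axis k 1) = 0" by (simp add: F_def vec_eq_iff)
    then have "\<forall>Y. om Z Y = 0"
      using lin_expand[OF bil_lin2[OF bo]] by (metis (no_types, lifting) scaleR_zero_right sum.neutral)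
    then show "Z = 0" by (rule nd)
  qed
  then have "surj F" by (rule linear_inj_imp_surj[OF lF])
  then obtain w where "F w = axis j 1" by (metis surjD)
  then have "\<forall>k. om w (axis k 1) = (axis j 1 :: real^'n) $ k" by (simp add: F_def vec_eq_iff)
  then have "\<forall>Y. om w Y = Y $ j"
  proof (intro allI)
    fix Y :: "real^'n"
    assume h: "\<forall>k. om w (axis k 1) = (axis j 1 :: real^'n) $ k"
    have "om w Y = (\<Sum>k\<in>UNIV. Y$k *\<^sub>R om w (axis k 1))" by (rule lin_expand[OF bil_lin2[OF bo]])
    also have "\<dots> = (\<Sum>k\<in>UNIV. Y$k * (if k = j then 1 else 0))" using h by (simp add: axis_def)
    also have "\<dots> = Y $ j" by (simp add: if_distrib cong: if_cong)
    finally show "om w Y = Y $ j" .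
  qed
  then show ?thesis by blast
qed

definition dualb :: "(real^'n::finite \<Rightarrow> real^'n \<Rightarrow> real) \<Rightarrow> 'n \<Rightarrow> real^'n" where
  "dualb om j = (SOME w. \<forall>Y. om w Y = Y $ j)"

lemma dualb: "omok om \<Longrightarrow> om (dualb om j) Y = Y $ j"
  unfolding dualb_def using someI_ex[OF dual_exists] by blast

lemma the_dual:
  assumes "omok om" "linear f"
  shows "(THE Z. \<forall>Y. om Z Y = f Y) = (\<Sum>j\<in>UNIV. f (axis j 1) *\<^sub>R dualb om j)"
proof (rule the_equality)
  have bo: "bilinear om" using assms by (auto simp: omok_def)
  show "\<forall>Y. om (\<Sum>j\<in>UNIV. f (axis j 1) *\<^sub>R dualb om j) Y = f Y"
  proof
    fix Y
    have "om (\<Sum>j\<in>UNIV. f (axis j 1) *\<^sub>R dualb om j) Y = (\<Sum>j\<in>UNIV. f (axis j 1) * Y $ j)"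
      by (simp add: linear_sum[OF bil_lin1[OF bo]] linear_scale[OF bil_lin1[OF bo]] dualb[OF assms(1)])
    also have "\<dots> = f Y" using lin_expand[OF assms(2), of Y] by (simp add: mult.commute)
    finally show "om (\<Sum>j\<in>UNIV. f (axis j 1) *\<^sub>R dualb om j) Y = f Y" .
  qed
next
  fix Z assume Z: "\<forall>Y. om Z Y = f Y"
  have bo: "bilinear om" and nd: "\<And>X. (\<forall>Y. om X Y = 0) \<Longrightarrow> X = 0" using assms by (auto simp: omok_def)
  have "\<forall>Y. om (Z - (\<Sum>j\<in>UNIV. f (axis j 1) *\<^sub>R dualb om j)) Y = 0"
  proof
    fix Y
    have "om (\<Sum>j\<in>UNIV. f (axis j 1) *\<^sub>R dualb om j) Y = (\<Sum>j\<in>UNIV. f (axis j 1) * Y $ j)"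
      by (simp add: linear_sum[OF bil_lin1[OF bo]] linear_scale[OF bil_lin1[OF bo]] dualb[OF assms(1)])
    also have "\<dots> = f Y" using lin_expand[OF assms(2), of Y] by (simp add: mult.commute)
    finally show "om (Z - (\<Sum>j\<in>UNIV. f (axis j 1) *\<^sub>R dualb om j)) Y = 0"
      using Z by (simp add: bilinear_lsub[OF bo])
  qed
  then show "Z = (\<Sum>j\<in>UNIV. f (axis j 1) *\<^sub>R dualb om j)" using nd by force
qed

lemma cop_formula:
  assumes "omok om" "bilinear mu" "linear J"
  shows "chern_ricci_op mu J om X = (\<Sum>j\<in>UNIV. phi mu J (mu X (axis j 1)) *\<^sub>R dualb om j)"
proof -
  have "linear (\<lambda>Y. phi mu J (mu X Y))"
    using linear_compose[OF bil_lin2[OF assms(2)] phi_linear[OF assms(2,3)]] by (simp add: o_def)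
  then show ?thesis
    unfolding chern_ricci_op_def crf_phi[OF assms(3)] using the_dual[OF assms(1)] by simp
qed




lemma lim_bilinear:
  fixes mu :: "'a \<Rightarrow> 'n::finite brkt"
  assumes F: "F \<noteq> bot" and ev: "eventually (\<lambda>t. bilinear (mu t)) F"
    and conv: "\<And>X Y. ((\<lambda>t. mu t X Y) \<longlongrightarrow> lam X Y) F"
  shows "bilinear lam"
  unfolding bilinear_def
proof (intro conjI allI)
  fix x y
  show "linear (\<lambda>z. lam z y)"
  proof (rule linearI)
    fix a b
    have "((\<lambda>t. mu t (a + b) y) \<longlongrightarrow> lam a y + lam b y) F"
      using tendsto_add[OF conv conv] by (rule Lim_transform_eventually)
        (use ev in \<open>auto elim!: eventually_mono simp: bilinear_ladd\<close>)
    then show "lam (a + b) y = lam a y + lam b y" using tendsto_unique[OF F conv] by blast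
  next
    fix c a
    have "((\<lambda>t. mu t (c *\<^sub>R a) y) \<longlongrightarrow> c *\<^sub>R lam a y) F"
      using tendsto_scaleR[OF tendsto_const conv] by (rule Lim_transform_eventually)
        (use ev in \<open>auto elim!: eventually_mono simp: bilinear_lmul\<close>)
    then show "lam (c *\<^sub>R a) y = c *\<^sub>R lam a y" using tendsto_unique[OF F conv] by blast
  qed
  show "linear (lam x)"
  proof (rule linearI)
    fix a b
    have "((\<lambda>t. mu t x (a + b)) \<longlongrightarrow> lam x a + lam x b) F"
      using tendsto_add[OF conv conv] by (rule Lim_transform_eventually)
        (use ev in \<open>auto elim!: eventually_mono simp: bilinear_radd\<close>)
    then show "lam x (a + b) = lam x a + lam x b" using tendsto_unique[OF F conv] by blast
  next
    fix c a
    have "((\<lambda>t. mu t x (c *\<^sub>R a)) \<longlongrightarrow> c *\<^sub>R lam x a) F"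
      using tendsto_scaleR[OF tendsto_const conv] by (rule Lim_transform_eventually)
        (use ev in \<open>auto elim!: eventually_mono simp: bilinear_rmul\<close>)
    then show "lam x (c *\<^sub>R a) = c *\<^sub>R lam x a" using tendsto_unique[OF F conv] by blast
  qed
qed

lemma lim_bil:
  fixes mu :: "'a \<Rightarrow> 'n::finite brkt"
  assumes ev: "eventually (\<lambda>t. bilinear (mu t)) F"
    and conv: "\<And>X Y. ((\<lambda>t. mu t X Y) \<longlongrightarrow> lam X Y) F" and bl: "bilinear lam"
    and a: "(a \<longlongrightarrow> a0) F" and b: "(b \<longlongrightarrow> b0) F"
  shows "((\<lambda>t. mu t (a t) (b t)) \<longlongrightarrow> lam a0 b0) F"
proof -
  have "((\<lambda>t. \<Sum>i\<in>UNIV. \<Sum>j\<in>UNIV. (a t $ i * b t $ j) *\<^sub>R mu t (axis i 1) (axis j 1))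
        \<longlongrightarrow> (\<Sum>i\<in>UNIV. \<Sum>j\<in>UNIV. (a0 $ i * b0 $ j) *\<^sub>R lam (axis i 1) (axis j 1))) F"
    by (intro tendsto_intros a b conv)
  then show ?thesis
    unfolding bil_expand[OF bl, of a0 b0, symmetric]
    by (rule Lim_transform_eventually) (use ev in \<open>auto elim!: eventually_mono intro: bil_expand[symmetric]\<close>)
qed

lemma lim_lin:
  fixes A :: "'a \<Rightarrow> real^'n::finite \<Rightarrow> real^'n"
  assumes ev: "eventually (\<lambda>t. linear (A t)) F"
    and conv: "\<And>X. ((\<lambda>t. A t X) \<longlongrightarrow> A0 X) F" and bl: "linear A0"
    and a: "(a \<longlongrightarrow> a0) F"
  shows "((\<lambda>t. A t (a t)) \<longlongrightarrow> A0 a0) F"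
proof -
  have "((\<lambda>t. \<Sum>i\<in>UNIV. a t $ i *\<^sub>R A t (axis i 1))
        \<longlongrightarrow> (\<Sum>i\<in>UNIV. a0 $ i *\<^sub>R A0 (axis i 1))) F"
    by (intro tendsto_intros a conv)
  then show ?thesis
    unfolding lin_expand[OF bl, of a0, symmetric]
    by (rule Lim_transform_eventually) (use ev in \<open>auto elim!: eventually_mono intro: lin_expand[symmetric]\<close>)
qed

lemma lim_tr:
  fixes f :: "'a \<Rightarrow> real^'n::finite \<Rightarrow> real^'n"
  assumes "\<And>x. ((\<lambda>t. f t x) \<longlongrightarrow> f0 x) F"
  shows "((\<lambda>t. tr (f t)) \<longlongrightarrow> tr f0) F"
  unfolding tr_def by (intro tendsto_intros assms)

lemma lim_linJ:
  fixes J :: "real^'n::finite \<Rightarrow> real^'n"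
  assumes "linear J" "(a \<longlongrightarrow> a0) F"
  shows "((\<lambda>t. J (a t)) \<longlongrightarrow> J a0) F"
  using linear_conv_bounded_linear[THEN iffD1, OF assms(1)] assms(2)
  by (rule bounded_linear.tendsto)

lemma lim_phi:
  fixes mu :: "'a \<Rightarrow> 'n::finite brkt"
  assumes ev: "eventually (\<lambda>t. bilinear (mu t)) F"
    and conv: "\<And>X Y. ((\<lambda>t. mu t X Y) \<longlongrightarrow> lam X Y) F" and bl: "bilinear lam"
    and J: "linear J" and z: "(z \<longlongrightarrow> z0) F"
  shows "((\<lambda>t. phi (mu t) J (z t)) \<longlongrightarrow> phi lam J z0) F"
  unfolding phi_def
  by (intro tendsto_intros lim_tr lim_linJ[OF J] lim_bil[OF ev conv bl] z tendsto_const)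

lemma lim_cop:
  fixes mu :: "'a \<Rightarrow> 'n::finite brkt"
  assumes ev: "eventually (\<lambda>t. bilinear (mu t)) F"
    and conv: "\<And>X Y. ((\<lambda>t. mu t X Y) \<longlongrightarrow> lam X Y) F" and bl: "bilinear lam"
    and J: "linear J" and om: "omok om" and z: "(z \<longlongrightarrow> z0) F"
  shows "((\<lambda>t. chern_ricci_op (mu t) J om (z t)) \<longlongrightarrow> chern_ricci_op lam J om z0) F"
proof -
  have "((\<lambda>t. \<Sum>j\<in>UNIV. phi (mu t) J (mu t (z t) (axis j 1)) *\<^sub>R dualb om j) \<longlongrightarrow>
     (\<Sum>j\<in>UNIV. phi lam J (lam z0 (axis j 1)) *\<^sub>R dualb om j)) F"
    by (intro tendsto_intros lim_phi[OF ev conv bl J] lim_bil[OF ev conv bl] z)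
  then show ?thesis
    unfolding cop_formula[OF om bl J]
    by (rule Lim_transform_eventually) (use ev in \<open>auto elim!: eventually_mono simp: cop_formula[OF om _ J]\<close>)
qed

lemma cop_linear:
  assumes "omok om" "bilinear mu" "linear J"
  shows "linear (chern_ricci_op mu J om)"
proof -
  have "linear (\<lambda>X. (\<Sum>j\<in>UNIV. phi mu J (mu X (axis j 1)) *\<^sub>R dualb om j))"
    by (rule linearI) (simp_all add: bilinear_ladd[OF assms(2)] bilinear_lmul[OF assms(2)]
        linear_add[OF phi_linear[OF assms(2,3)]] linear_scale[OF phi_linear[OF assms(2,3)]]
        scaleR_add_left sum.distrib scaleR_sum_right)
  then show ?thesis using cop_formula[OF assms] by presburger
qed




lemma unif_bound:
  fixes L :: "real \<Rightarrow> 'v::euclidean_space \<Rightarrow> 'w::real_normed_vector"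
  assumes "compact S" and lin: "\<forall>t\<in>S. linear (L t)" and cont: "\<forall>v. continuous_on S (\<lambda>t. L t v)"
  shows "\<exists>K\<ge>0. \<forall>t\<in>S. \<forall>v. norm (L t v) \<le> K * norm v"
proof -
  have "\<forall>b. \<exists>M>0. \<forall>t\<in>S. norm (L t b) \<le> M"
  proof
    fix b
    have "bounded ((\<lambda>t. L t b) ` S)"
      by (rule compact_imp_bounded, rule compact_continuous_image[OF cont[rule_format] assms(1)])
    then show "\<exists>M>0. \<forall>t\<in>S. norm (L t b) \<le> M" by (auto simp: bounded_pos)
  qed
  then obtain M where M: "\<And>b. M b > 0" "\<And>b t. t \<in> S \<Longrightarrow> norm (L t b) \<le> M b" by metis
  define K where "K = (\<Sum>b\<in>Basis. M b)"
  have K0: "K \<ge> 0" unfolding K_def by (intro sum_nonneg) (use M(1) in \<open>auto intro: less_imp_le\<close>)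
  have "norm (L t v) \<le> K * norm v" if t: "t \<in> S" for t v
  proof -
    have "L t v = L t (\<Sum>b\<in>Basis. (v \<bullet> b) *\<^sub>R b)" by (simp add: euclidean_representation)
    also have "\<dots> = (\<Sum>b\<in>Basis. (v \<bullet> b) *\<^sub>R L t b)"
      using lin t by (simp add: linear_sum linear_scale)
    finally have "norm (L t v) \<le> (\<Sum>b\<in>Basis. norm ((v \<bullet> b) *\<^sub>R L t b))"
      by (metis norm_sum)
    also have "\<dots> \<le> (\<Sum>b\<in>Basis. norm v * M b)"
    proof (rule sum_mono)
      fix b :: 'v assume "b \<in> Basis"
      then have "\<bar>v \<bullet> b\<bar> \<le> norm v" by (rule Basis_le_norm)
      then show "norm ((v \<bullet> b) *\<^sub>R L t b) \<le> norm v * M b"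
        using M(2)[OF t, of b] by (simp add: mult_mono')
    qed
    also have "\<dots> = K * norm v" by (simp add: K_def sum_distrib_left mult.commute)
    finally show ?thesis .
  qed
  then show ?thesis using K0 by blast
qed

lemma gronwall0:
  fixes x :: "real \<Rightarrow> 'v::euclidean_space"
  assumes T: "0 \<le> T" and x0: "x 0 = 0"
    and der: "\<forall>t\<in>{0..T}. (x has_vector_derivative L t (x t)) (at t within {0..T})"
    and lin: "\<forall>t\<in>{0..T}. linear (L t)"
    and cont: "\<forall>v. continuous_on {0..T} (\<lambda>t. L t v)"
  shows "\<forall>t\<in>{0..T}. x t = 0"
proof -
  obtain K where K: "K \<ge> 0" "\<And>t v. t \<in> {0..T} \<Longrightarrow> norm (L t v) \<le> K * norm v"
    using unif_bound[OF compact_Icc lin cont] by blast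
  define V where "V t = exp (-(2*K)*t) * (x t \<bullet> x t)" for t
  define V' where "V' t = exp (-(2*K)*t) * (2 * (x t \<bullet> L t (x t))) - (2*K) * exp (-(2*K)*t) * (x t \<bullet> x t)" for t
  have dV: "(V has_real_derivative V' t) (at t within {0..T})" if t: "t \<in> {0..T}" for t
  proof -
    have dx: "(x has_vector_derivative L t (x t)) (at t within {0..T})" using der t by blast
    have "((\<lambda>t. x t \<bullet> x t) has_vector_derivative (x t \<bullet> L t (x t) + L t (x t) \<bullet> x t)) (at t within {0..T})"
      by (rule bounded_bilinear.has_vector_derivative[OF bounded_bilinear_inner dx dx])
    then have di: "((\<lambda>t. x t \<bullet> x t) has_real_derivative (2 * (x t \<bullet> L t (x t)))) (at t within {0..T})"
      by (simp add: has_real_derivative_iff_has_vector_derivative inner_commute)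
    have de: "((\<lambda>t. exp (-(2*K)*t)) has_real_derivative (exp (-(2*K)*t) * (-(2*K)))) (at t within {0..T})"
      by (auto intro!: derivative_eq_intros)
    show ?thesis unfolding V_def V'_def
      using DERIV_mult[OF de di] by (simp add: algebra_simps)
  qed
  have V'0: "V' t \<le> 0" if t: "t \<in> {0..T}" for t
  proof -
    have "x t \<bullet> L t (x t) \<le> norm (x t) * norm (L t (x t))" by (rule norm_cauchy_schwarz)
    also have "\<dots> \<le> norm (x t) * (K * norm (x t))" using K(2)[OF t] by (simp add: mult_left_mono)
    also have "\<dots> = K * (x t \<bullet> x t)" by (simp add: power2_norm_eq_inner[symmetric] power2_eq_square)
    finally have "x t \<bullet> L t (x t) \<le> K * (x t \<bullet> x t)" .
    then have "exp (-(2*K)*t) * (x t \<bullet> L t (x t)) \<le> exp (-(2*K)*t) * (K * (x t \<bullet> x t))"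
      by (intro mult_left_mono) auto
    then show ?thesis unfolding V'_def by (simp add: algebra_simps)
  qed
  show ?thesis
  proof
    fix t assume t: "t \<in> {0..T}"
    have "\<exists>c\<in>{0..t}. V t - V 0 = (\<lambda>h. h * V' c) (t - 0)"
    proof (rule mvt_very_simple)
      show "0 \<le> t" using t by simp
      fix s assume "0 \<le> s" "s \<le> t"
      then have "(V has_real_derivative V' s) (at s within {0..t})"
        using t by (intro DERIV_subset[OF dV]) auto
      then show "(V has_derivative (\<lambda>h. h * V' s)) (at s within {0..t})"
        by (simp add: has_field_derivative_def mult.commute[of _ "V' s"])
    qed
    then obtain c where c: "c \<in> {0..t}" "V t - V 0 = t * V' c" by auto
    have "V 0 = 0" by (simp add: V_def x0)
    moreover have "V' c \<le> 0" using c t by (intro V'0) auto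
    ultimately have "V t \<le> 0" using c t by (simp add: mult_nonneg_nonpos)
    then have "x t \<bullet> x t \<le> 0" unfolding V_def by (simp add: mult_le_0_iff)
    then show "x t = 0" by (metis inner_ge_zero inner_eq_zero_iff order_antisym)
  qed
qed

lemma gronwall_S:
  fixes x :: "real \<Rightarrow> 'v::euclidean_space"
  assumes S: "S = {0..} \<or> S = {..0}" and x0: "x 0 = 0"
    and der: "\<forall>t\<in>S. (x has_vector_derivative L t (x t)) (at t within S)"
    and lin: "\<forall>t\<in>S. linear (L t)"
    and cont: "\<forall>v. continuous_on S (\<lambda>t. L t v)"
  shows "\<forall>t\<in>S. x t = 0"
  using S
proof
  assume S: "S = {0..}"
  show ?thesis
  proof
    fix t assume t: "t \<in> S"
    have "\<forall>s\<in>{0..t}. x s = 0"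
    proof (rule gronwall0[where L = L])
      show "0 \<le> t" using t S by simp
      show "\<forall>s\<in>{0..t}. (x has_vector_derivative L s (x s)) (at s within {0..t})"
      proof
        fix s assume s: "s \<in> {0..t}"
        then have "(x has_vector_derivative L s (x s)) (at s within S)" using der S by auto
        then show "(x has_vector_derivative L s (x s)) (at s within {0..t})"
          by (rule has_vector_derivative_within_subset) (use S in auto)
      qed
      show "\<forall>s\<in>{0..t}. linear (L s)" using lin S by auto
      show "\<forall>v. continuous_on {0..t} (\<lambda>s. L s v)" using cont S by (auto intro: continuous_on_subset)
    qed (rule x0)
    then show "x t = 0" using t S by auto
  qed
next
  assume S: "S = {..0}"
  show ?thesis
  proof
    fix t assume t: "t \<in> S"
    have "\<forall>s\<in>{0..-t}. x (- s) = 0"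
    proof (rule gronwall0[where L = "\<lambda>s v. - L (-s) v"])
      show "0 \<le> -t" using t S by simp
      show "\<forall>s\<in>{0..-t}. ((\<lambda>s. x (-s)) has_vector_derivative - L (-s) (x (-s))) (at s within {0..-t})"
      proof
        fix s assume s: "s \<in> {0..-t}"
        have d1: "(uminus has_vector_derivative (-1)) (at s within {0..-t})"
          by (auto intro!: derivative_eq_intros)
        have "(x has_vector_derivative L (-s) (x (-s))) (at (-s) within S)" using der s S by auto
        then have d2: "(x has_vector_derivative L (-s) (x (-s))) (at (-s) within uminus ` {0..-t})"
          by (rule has_vector_derivative_within_subset) (use S in auto)
        show "((\<lambda>s. x (-s)) has_vector_derivative - L (-s) (x (-s))) (at s within {0..-t})"
          using vector_diff_chain_within[OF d1 d2] by (simp add: o_def)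
      qed
      show "\<forall>s\<in>{0..-t}. linear (\<lambda>v. - L (-s) v)" using lin S by (auto intro: linear_compose_neg)
      show "\<forall>v. continuous_on {0..-t} (\<lambda>s. - L (-s) v)"
      proof
        fix v
        have "continuous_on {0..-t} ((\<lambda>s. L s v) \<circ> uminus)"
          by (intro continuous_on_compose continuous_intros continuous_on_subset[OF cont[rule_format]]) (use S in auto)
        then show "continuous_on {0..-t} (\<lambda>s. - L (-s) v)" by (auto intro: continuous_intros simp: o_def)
      qed
    qed (simp add: x0)
    then show "x t = 0" using t S by (metis atLeastAtMost_iff le_minus_iff lessThan_iff add.inverse_inverse atMost_iff neg_le_0_iff_le order_refl)
  qed
qed




lemma deriv_lim_pos:
  fixes f g :: "real \<Rightarrow> real"
  assumes der: "\<forall>t\<ge>0. (f has_real_derivative g t) (at t within {0..})"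
    and g: "(g \<longlongrightarrow> c) at_top" and f: "(f \<longlongrightarrow> l) at_top"
  shows "\<not> c > 0"
proof
  assume c: "c > 0"
  have "eventually (\<lambda>t. g t > c/2) at_top"
    using order_tendstoD(1)[OF g, of "c/2"] c by simp
  then obtain t1 where t1: "\<And>t. t \<ge> t1 \<Longrightarrow> g t > c/2" by (auto simp: eventually_at_top_linorder)
  define t0 where "t0 = max t1 0"
  have grow: "f t \<ge> f t0 + (t - t0) * (c/2)" if t: "t \<ge> t0" for t
  proof -
    have "\<exists>x\<in>{t0..t}. f t - f t0 = (\<lambda>h. h * g x) (t - t0)"
    proof (rule mvt_very_simple[OF t])
      fix s assume s: "t0 \<le> s" "s \<le> t"
      have "s \<ge> 0" using s by (simp add: t0_def)
      then have "(f has_real_derivative g s) (at s within {0..})" using der by blast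
      then have "(f has_real_derivative g s) (at s within {t0..t})"
        by (rule DERIV_subset) (auto simp: t0_def)
      then show "(f has_derivative (\<lambda>h. h * g s)) (at s within {t0..t})"
        by (simp add: has_field_derivative_def mult.commute[of _ "g s"])
    qed
    then obtain x where x: "x \<in> {t0..t}" "f t - f t0 = (t - t0) * g x" by auto
    have "g x > c/2" using x t1 by (auto simp: t0_def)
    then have "(t - t0) * (c/2) \<le> (t - t0) * g x" using x by (intro mult_left_mono) auto
    then show ?thesis using x by simp
  qed
  have "eventually (\<lambda>t. f t < l + 1) at_top"
    using order_tendstoD(2)[OF f, of "l+1"] by simp
  then obtain t2 where t2: "\<And>t. t \<ge> t2 \<Longrightarrow> f t < l + 1" by (auto simp: eventually_at_top_linorder)
  define t where "t = max t2 t0 + (\<bar>l + 1 - f t0\<bar> + 1) / (c/2)"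
  have tt: "t \<ge> t0" "t \<ge> t2" using c by (auto simp: t_def intro!: add_increasing2 divide_nonneg_pos)
  have "(t - t0) * (c/2) \<ge> ((\<bar>l + 1 - f t0\<bar> + 1) / (c/2)) * (c/2)"
    using c by (intro mult_right_mono) (auto simp: t_def)
  then have "(t - t0) * (c/2) \<ge> \<bar>l + 1 - f t0\<bar> + 1" using c by simp
  then have "f t \<ge> l + 2" using grow[OF tt(1)] by linarith
  then show False using t2[OF tt(2)] by simp
qed

lemma deriv_lim_top:
  fixes f g :: "real \<Rightarrow> real"
  assumes der: "\<forall>t\<ge>0. (f has_real_derivative g t) (at t within {0..})"
    and g: "(g \<longlongrightarrow> c) at_top" and f: "(f \<longlongrightarrow> l) at_top"
  shows "c = 0"
proof -
  have "\<not> c > 0" by (rule deriv_lim_pos[OF der g f])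
  moreover have "\<not> -c > 0"
  proof (rule deriv_lim_pos[where f="\<lambda>t. - f t" and g="\<lambda>t. - g t"])
    show "\<forall>t\<ge>0. ((\<lambda>t. - f t) has_real_derivative - g t) (at t within {0..})"
      using der by (auto intro: DERIV_minus)
  qed (auto intro: tendsto_minus g f)
  ultimately show ?thesis by simp
qed

lemma deriv_lim_bot:
  fixes f g :: "real \<Rightarrow> real"
  assumes der: "\<forall>t\<le>0. (f has_real_derivative g t) (at t within {..0})"
    and g: "(g \<longlongrightarrow> c) at_bot" and f: "(f \<longlongrightarrow> l) at_bot"
  shows "c = 0"
proof -
  have "- c = 0"
  proof (rule deriv_lim_top[where f="\<lambda>t. f (-t)" and g="\<lambda>t. - g (-t)"])
    show "\<forall>t\<ge>0. ((\<lambda>t. f (- t)) has_real_derivative - g (- t)) (at t within {0..})"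
    proof (intro allI impI)
      fix t :: real assume t: "t \<ge> 0"
      have d1: "(uminus has_vector_derivative (-1)) (at t within {0..})"
        by (auto intro!: derivative_eq_intros)
      have "(f has_vector_derivative g (-t)) (at (-t) within {..0})"
        using der t by (simp add: has_real_derivative_iff_has_vector_derivative)
      then have d2: "(f has_vector_derivative g (-t)) (at (-t) within uminus ` {0..})"
        by (rule has_vector_derivative_within_subset) auto
      show "((\<lambda>t. f (- t)) has_real_derivative - g (- t)) (at t within {0..})"
        using vector_diff_chain_within[OF d1 d2]
        by (simp add: o_def has_real_derivative_iff_has_vector_derivative)
    qed
    show "((\<lambda>t. - g (- t)) \<longlongrightarrow> - c) at_top"
      by (intro tendsto_minus filterlim_compose[OF g] filterlim_uminus_at_bot_at_top)
    show "((\<lambda>t. f (- t)) \<longlongrightarrow> l) at_top"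
      by (intro filterlim_compose[OF f] filterlim_uminus_at_bot_at_top)
  qed
  then show ?thesis by simp
qed




definition TT :: "(real^'n::finite \<Rightarrow> real^'n) \<Rightarrow> (real^'n \<Rightarrow> real^'n) \<Rightarrow> (real^'n \<Rightarrow> real^'n) \<Rightarrow> real" where
  "TT J f g = tr (\<lambda>x. J (f (g x) - g (f x)))"

definition am :: "(real^'n::finite \<Rightarrow> real^'n) \<Rightarrow> (real^'n \<Rightarrow> real^'n) \<Rightarrow> real^'n \<Rightarrow> real^'n" where
  "am J f v = (1/2) *\<^sub>R (f v + J (f (J v)))"

definition cm :: "(real^'n::finite \<Rightarrow> real^'n) \<Rightarrow> (real^'n \<Rightarrow> real^'n) \<Rightarrow> real^'n \<Rightarrow> real^'n" where
  "cm J f v = (1/2) *\<^sub>R (f v - J (f (J v)))"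

locale cplx =
  fixes J :: "real^'n::finite \<Rightarrow> real^'n"
  assumes lJ: "linear J" and JJ: "\<And>x. J (J x) = - x"
begin

lemma Jadd: "J (a + b) = J a + J b" using lJ by (simp add: linear_add)
lemma Jdiff: "J (a - b) = J a - J b" using lJ by (simp add: linear_diff)
lemma Jscale: "J (c *\<^sub>R a) = c *\<^sub>R J a" using lJ by (simp add: linear_scale)
lemma Jneg: "J (- a) = - J a" using lJ by (simp add: linear_neg)
lemma J0: "J 0 = 0" using lJ by (simp add: linear_0)
lemmas Jsimps = Jadd Jdiff Jscale Jneg J0 JJ

lemma tr_anti:
  assumes lh: "linear h" and anti: "\<And>v. h (J v) = - J (h v)"
  shows "tr h = 0"
proof -
  have "tr (\<lambda>x. J (h (J x))) = tr (\<lambda>x. h (J (J x)))"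
    using tr_comm[OF lJ, of "\<lambda>x. h (J x)"] linear_compose[OF lJ lh] by (simp add: o_def)
  also have "\<dots> = - tr h" by (simp add: JJ linear_neg[OF lh] tr_neg)
  finally have "tr (\<lambda>x. J (h (J x))) = - tr h" .
  moreover have "(\<lambda>x. J (h (J x))) = h" by (rule ext) (simp add: anti Jneg JJ)
  ultimately show ?thesis by simp
qed

lemma lin_am: assumes "linear f" shows "linear (am J f)"
  unfolding am_def
proof (rule linearI)
  fix a b show "(1/2) *\<^sub>R (f (a + b) + J (f (J (a + b)))) = (1/2) *\<^sub>R (f a + J (f (J a))) + (1/2) *\<^sub>R (f b + J (f (J b)))"
    by (simp only: linear_add[OF assms] Jadd scaleR_add_right add_ac)
next
  fix c a show "(1/2) *\<^sub>R (f (c *\<^sub>R a) + J (f (J (c *\<^sub>R a)))) = c *\<^sub>R ((1/2) *\<^sub>R (f a + J (f (J a))))"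
    by (simp only: linear_scale[OF assms] Jscale scaleR_add_right scaleR_scaleR mult.commute)
qed
lemma lin_cm: assumes "linear f" shows "linear (cm J f)"
  unfolding cm_def
proof (rule linearI)
  fix a b show "(1/2) *\<^sub>R (f (a + b) - J (f (J (a + b)))) = (1/2) *\<^sub>R (f a - J (f (J a))) + (1/2) *\<^sub>R (f b - J (f (J b)))"
    by (simp add: linear_add[OF assms] Jadd scaleR_diff_right scaleR_add_right)
next
  fix c a show "(1/2) *\<^sub>R (f (c *\<^sub>R a) - J (f (J (c *\<^sub>R a)))) = c *\<^sub>R ((1/2) *\<^sub>R (f a - J (f (J a))))"
    by (simp only: linear_scale[OF assms] Jscale scaleR_diff_right scaleR_scaleR mult.commute)
qed
lemma am_anti: "linear f \<Longrightarrow> am J f (J v) = - J (am J f v)"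
  unfolding am_def by (simp add: Jsimps linear_neg algebra_simps)
lemma cm_comm: "linear f \<Longrightarrow> cm J f (J v) = J (cm J f v)"
  unfolding cm_def by (simp add: Jsimps linear_neg algebra_simps)
lemma split_cm_am: "f v = cm J f v + am J f v"
proof -
  have "(1/2) *\<^sub>R (x - y) + (1/2) *\<^sub>R (x + y) = ((1/2) + (1/2)) *\<^sub>R (x::real^'n)" for x y
    by (simp only: scaleR_diff_right scaleR_add_right scaleR_add_left) (simp add: algebra_simps)
  then show ?thesis unfolding cm_def am_def by simp
qed

lemma TT_add1:
  assumes "linear g"
  shows "TT J (\<lambda>x. f1 x + f2 x) g = TT J f1 g + TT J f2 g"
  unfolding TT_def using assms by (simp add: linear_add Jsimps tr_add[symmetric] algebra_simps)
lemma TT_add2: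
  assumes "linear f"
  shows "TT J f (\<lambda>x. g1 x + g2 x) = TT J f g1 + TT J f g2"
  unfolding TT_def using assms by (simp add: linear_add Jsimps tr_add[symmetric] algebra_simps)

lemma TT_cc:
  assumes "linear f" "linear g" "\<And>v. f (J v) = J (f v)"
  shows "TT J f g = 0"
proof -
  have l1: "linear (\<lambda>x. J (g x))" using linear_compose[OF assms(2) lJ] by (simp add: o_def)
  have "tr (\<lambda>x. J (g (f x))) = tr (\<lambda>x. f (J (g x)))"
    using tr_comm[OF l1 assms(1)] by simp
  then show ?thesis unfolding TT_def
    by (simp add: Jdiff tr_diff assms(3))
qed

lemma TT_ca:
  assumes lf: "linear f" and lg: "linear g" and cf: "\<And>v. f (J v) = J (f v)" and ag: "\<And>v. g (J v) = - J (g v)"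
  shows "TT J f g = 0"
proof -
  have l1: "linear (\<lambda>x. J (f (g x)))" using linear_compose[OF linear_compose[OF lg lf] lJ] by (simp add: o_def)
  have l2: "linear (\<lambda>x. J (g (f x)))" using linear_compose[OF linear_compose[OF lf lg] lJ] by (simp add: o_def)
  have "tr (\<lambda>x. J (f (g x))) = 0" by (rule tr_anti[OF l1]) (simp add: cf ag Jsimps linear_neg[OF lf])
  moreover have "tr (\<lambda>x. J (g (f x))) = 0" by (rule tr_anti[OF l2]) (simp add: cf ag Jsimps)
  ultimately show ?thesis unfolding TT_def by (simp add: Jdiff tr_diff)
qed

lemma TT_swap: "TT J f g = - TT J g f"
  unfolding TT_def by (simp add: Jdiff tr_diff)

lemma TT_am:
  assumes lf: "linear f" and lg: "linear g"
  shows "TT J f g = TT J (am J f) (am J g)"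
proof -
  have ef: "f = (\<lambda>x. cm J f x + am J f x)" by (rule ext, rule split_cm_am)
  have eg: "g = (\<lambda>x. cm J g x + am J g x)" by (rule ext, rule split_cm_am)
  note L = lin_am[OF lf] lin_am[OF lg] lin_cm[OF lf] lin_cm[OF lg]
  have "TT J f g = TT J (cm J f) (cm J g) + TT J (cm J f) (am J g) + (TT J (am J f) (cm J g) + TT J (am J f) (am J g))"
    apply (subst ef, subst eg)
    apply (simp add: TT_add1 TT_add2 L linear_add linear_compose_add)
    done
  also have "TT J (cm J f) (cm J g) = 0" by (rule TT_cc[OF L(3,4) cm_comm[OF lf]])
  also have "TT J (cm J f) (am J g) = 0" by (rule TT_ca[OF L(3,2) cm_comm[OF lf] am_anti[OF lg]])
  also have "TT J (am J f) (cm J g) = 0"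
    using TT_ca[OF L(4,1) cm_comm[OF lg] am_anti[OF lf]] TT_swap[of "am J f" "cm J g"] by simp
  finally show ?thesis by simp
qed

lemma TT_JJ:
  assumes lf: "linear f" and lg: "linear g" and af: "\<And>v. f (J v) = - J (f v)" and ag: "\<And>v. g (J v) = - J (g v)"
  shows "TT J (\<lambda>v. J (f v)) (\<lambda>v. J (g v)) = TT J f g"
  unfolding TT_def by (simp add: af ag Jsimps)

end




definition nij :: "'n::finite brkt \<Rightarrow> (real^'n \<Rightarrow> real^'n) \<Rightarrow> 'n brkt" where
  "nij mu J X Y = mu (J X) (J Y) - mu X Y - J (mu (J X) Y) - J (mu X (J Y))"

definition jac :: "'n::finite brkt \<Rightarrow> real^'n \<Rightarrow> real^'n \<Rightarrow> real^'n \<Rightarrow> real^'n" where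
  "jac mu X Y Z = mu X (mu Y Z) + mu Y (mu Z X) + mu Z (mu X Y)"

definition SS :: "'n::finite brkt \<Rightarrow> (real^'n \<Rightarrow> real^'n) \<Rightarrow> real^'n \<Rightarrow> real^'n \<Rightarrow> real^'n" where
  "SS n J X v = -(1/2) *\<^sub>R n X (J v)"

definition Err :: "'n::finite brkt \<Rightarrow> (real^'n \<Rightarrow> real^'n) \<Rightarrow> 'n brkt \<Rightarrow> real^'n \<Rightarrow> real^'n \<Rightarrow> real" where
  "Err mu J n X Y = TT J (\<lambda>v. J (am J (mu X) v)) (SS n J Y) + TT J (SS n J X) (\<lambda>v. J (am J (mu Y) v))
      + TT J (SS n J X) (SS n J Y)"

lemma dual_sum:
  assumes "omok om" "linear f"
  shows "om (\<Sum>j\<in>UNIV. f (axis j 1) *\<^sub>R dualb om j) Y = f Y"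
proof -
  have bo: "bilinear om" using assms by (auto simp: omok_def)
  have "om (\<Sum>j\<in>UNIV. f (axis j 1) *\<^sub>R dualb om j) Y = (\<Sum>j\<in>UNIV. f (axis j 1) * Y $ j)"
    by (simp add: linear_sum[OF bil_lin1[OF bo]] linear_scale[OF bil_lin1[OF bo]] dualb[OF assms(1)])
  also have "\<dots> = f Y" using lin_expand[OF assms(2), of Y] by (simp add: mult.commute)
  finally show ?thesis .
qed

lemma cop_om:
  assumes "omok om" "bilinear mu" "linear J"
  shows "om (chern_ricci_op mu J om X) Y = phi mu J (mu X Y)"
proof -
  have "linear (\<lambda>Y. phi mu J (mu X Y))"
    using linear_compose[OF bil_lin2[OF assms(2)] phi_linear[OF assms(2,3)]] by (simp add: o_def)
  then show ?thesis unfolding cop_formula[OF assms] by (rule dual_sum[OF assms(1)])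
qed

context cplx
begin

lemma nij_lin2: "bilinear mu \<Longrightarrow> linear (nij mu J X)"
  unfolding nij_def by (rule linearI) (simp_all add: bilinear_radd bilinear_rmul Jsimps algebra_simps)

lemma SS_lin: "linear (n X) \<Longrightarrow> linear (SS n J X)"
  unfolding SS_def by (rule linearI) (simp_all add: linear_add linear_scale Jsimps algebra_simps)

lemma ad_comm:
  assumes bl: "bilinear mu" and as: "\<forall>X Y. mu X Y = - mu Y X" and jc: "\<forall>X Y Z. jac mu X Y Z = 0"
  shows "mu (mu a b) v = mu a (mu b v) - mu b (mu a v)"
proof -
  have "mu a (mu b v) + mu b (mu v a) + mu v (mu a b) = 0" using jc by (simp add: jac_def)
  moreover have "mu b (mu v a) = - mu b (mu a v)" using as bilinear_rneg[OF bl] by metis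
  moreover have "mu v (mu a b) = - mu (mu a b) v" using as by metis
  ultimately show ?thesis by (simp add: algebra_simps)
qed

lemma tr_ad_br:
  assumes bl: "bilinear mu" and as: "\<forall>X Y. mu X Y = - mu Y X" and jc: "\<forall>X Y Z. jac mu X Y Z = 0"
  shows "tr (mu (mu a b)) = 0"
proof -
  have "tr (mu (mu a b)) = tr (\<lambda>v. mu a (mu b v) - mu b (mu a v))"
    using ad_comm[OF assms] by metis
  also have "\<dots> = 0" using tr_comm[OF bil_lin2[OF bl] bil_lin2[OF bl], of a b] by (simp add: tr_diff)
  finally show ?thesis .
qed

lemma am_JX:
  assumes bl: "bilinear mu"
  shows "am J (mu (J X)) v = J (am J (mu X) v) + SS (nij mu J) J X v"
  unfolding am_def SS_def nij_def
  by (simp add: Jsimps bilinear_rneg[OF bl] algebra_simps)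

lemma KJ:
  assumes bl: "bilinear mu" and as: "\<forall>X Y. mu X Y = - mu Y X" and jc: "\<forall>X Y Z. jac mu X Y Z = 0"
  shows "phi mu J (mu (J X) (J Y)) - phi mu J (mu X Y) =
     -(1/2) * Err mu J (nij mu J) X Y + (1/2) * tr (mu (J (nij mu J X Y)))"
proof -
  have trJ: "tr (\<lambda>v. J (mu (mu a b) v)) = TT J (mu a) (mu b)" for a b
    unfolding TT_def using ad_comm[OF assms] by simp
  let ?N = "nij mu J"
  have lS: "linear (SS ?N J Z)" for Z by (rule SS_lin, rule nij_lin2[OF bl])
  have lm: "linear (mu Z)" for Z by (rule bil_lin2[OF bl])
  have lJA: "linear (\<lambda>v. J (am J (mu Z) v))" for Z
    using linear_compose[OF lin_am[OF lm] lJ] by (simp add: o_def)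
  have e2: "am J (mu (J Z)) = (\<lambda>v. J (am J (mu Z) v) + SS ?N J Z v)" for Z
    by (rule ext, rule am_JX[OF bl])
  have lsum: "linear (\<lambda>v. J (am J (mu Z) v) + SS ?N J Z v)" for Z
    using linear_compose_add[OF lJA lS] by simp
  have "TT J (mu (J X)) (mu (J Y)) = TT J (am J (mu (J X))) (am J (mu (J Y)))"
    by (rule TT_am[OF lm lm])
  also have "\<dots> = TT J (\<lambda>v. J (am J (mu X) v) + SS ?N J X v) (\<lambda>v. J (am J (mu Y) v) + SS ?N J Y v)"
    by (simp only: e2)
  also have "\<dots> = TT J (\<lambda>v. J (am J (mu X) v)) (\<lambda>v. J (am J (mu Y) v)) + Err mu J ?N X Y"
    unfolding Err_def by (simp add: TT_add1[OF lsum] TT_add2[OF lJA] TT_add2[OF lS])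
  also have "TT J (\<lambda>v. J (am J (mu X) v)) (\<lambda>v. J (am J (mu Y) v)) = TT J (am J (mu X)) (am J (mu Y))"
    by (rule TT_JJ[OF lin_am[OF lm] lin_am[OF lm] am_anti[OF lm] am_anti[OF lm]])
  also have "\<dots> = TT J (mu X) (mu Y)" by (rule TT_am[OF lm lm, symmetric])
  finally have t1: "TT J (mu (J X)) (mu (J Y)) = TT J (mu X) (mu Y) + Err mu J ?N X Y" .
  have "J (mu (J X) (J Y)) = J (mu X Y) - mu (J X) Y - mu X (J Y) + J (?N X Y)"
    unfolding nij_def by (simp add: Jsimps)
  then have "mu (J (mu (J X) (J Y))) = (\<lambda>v. mu (J (mu X Y)) v - mu (mu (J X) Y) v - mu (mu X (J Y)) v + mu (J (?N X Y)) v)"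
    by (simp add: bil_fun_add[OF bl] bilinear_lsub[OF bl] fun_eq_iff)
  then have t2: "tr (mu (J (mu (J X) (J Y)))) = tr (mu (J (mu X Y))) + tr (mu (J (?N X Y)))"
    by (simp add: tr_add tr_diff tr_ad_br[OF assms])
  show ?thesis unfolding phi_def trJ t1 t2 by (simp add: algebra_simps)
qed

lemma Err0: "linear (mu X) \<Longrightarrow> linear (mu Y) \<Longrightarrow> (\<And>a b. n a b = 0) \<Longrightarrow> Err mu J n X Y = 0"
  unfolding Err_def TT_def SS_def am_def by (simp add: Jsimps linear_0 tr_zero)

end




lemma dual_unique:
  assumes "omok om" "linear f" "\<forall>Y. om Z Y = f Y"
  shows "Z = (\<Sum>j\<in>UNIV. f (axis j 1) *\<^sub>R dualb om j)"
proof -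
  have bo: "bilinear om" and nd: "\<And>X. (\<forall>Y. om X Y = 0) \<Longrightarrow> X = 0" using assms(1) unfolding omok_def by blast+
  have "\<forall>Y. om (Z - (\<Sum>j\<in>UNIV. f (axis j 1) *\<^sub>R dualb om j)) Y = 0"
    using assms(3) dual_sum[OF assms(1,2)] by (simp add: bilinear_lsub[OF bo])
  then show ?thesis using nd by force
qed

definition omherm :: "(real^'n::finite \<Rightarrow> real^'n \<Rightarrow> real) \<Rightarrow> (real^'n \<Rightarrow> real^'n) \<Rightarrow> bool" where
  "omherm om J \<longleftrightarrow> omok om \<and> (\<forall>X Y. om X Y = - om Y X) \<and> (\<forall>X Y. om (J X) (J Y) = om X Y) \<and>
     (\<forall>X. X \<noteq> 0 \<longrightarrow> om X (J X) > 0)"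

context cplx
begin

lemma om_J1:
  assumes "omherm om J" shows "om (J U) Y = - om U (J Y)"
proof -
  have bo: "bilinear om" using assms unfolding omherm_def omok_def by blast
  have "om (J U) Y = om (J (J U)) (J Y)" using assms unfolding omherm_def by metis
  also have "\<dots> = - om U (J Y)" by (simp add: JJ bilinear_lneg[OF bo])
  finally show ?thesis .
qed

lemma comm_formula:
  assumes om: "omherm om J" and bl: "bilinear mu"
  shows "chern_ricci_op mu J om (J X) - J (chern_ricci_op mu J om X) =
    (\<Sum>j\<in>UNIV. (phi mu J (mu (J X) (J (- J (axis j 1)))) - phi mu J (mu X (- J (axis j 1)))) *\<^sub>R dualb om j)"
proof -
  have ok: "omok om" using om unfolding omherm_def by blast
  have bo: "bilinear om" using ok unfolding omok_def by blast
  define f where "f Y = phi mu J (mu (J X) Y) + phi mu J (mu X (J Y))" for Y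
  have lp: "linear (phi mu J)" by (rule phi_linear[OF bl lJ])
  have lf: "linear f" unfolding f_def
    by (rule linearI) (simp_all add: bilinear_radd[OF bl] bilinear_rmul[OF bl] Jsimps linear_add[OF lp] linear_scale[OF lp] algebra_simps)
  have "\<forall>Y. om (chern_ricci_op mu J om (J X) - J (chern_ricci_op mu J om X)) Y = f Y"
    by (simp add: bilinear_lsub[OF bo] om_J1[OF om] cop_om[OF ok bl lJ] f_def)
  then have "chern_ricci_op mu J om (J X) - J (chern_ricci_op mu J om X) = (\<Sum>j\<in>UNIV. f (axis j 1) *\<^sub>R dualb om j)"
    by (rule dual_unique[OF ok lf])
  also have "\<dots> = (\<Sum>j\<in>UNIV. (phi mu J (mu (J X) (J (- J (axis j 1)))) - phi mu J (mu X (- J (axis j 1)))) *\<^sub>R dualb om j)"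
    by (simp add: f_def Jsimps bilinear_rneg[OF bl] linear_neg[OF lp])
  finally show ?thesis .
qed

lemma final_alg:
  assumes om: "omherm om J" and bl: "bilinear lam" and as: "\<forall>X Y. lam X Y = - lam Y X"
    and jc: "\<forall>X Y Z. jac lam X Y Z = 0" and nj: "\<forall>X Y. nij lam J X Y = 0"
    and der: "\<forall>X Y. delta lam (chern_ricci_op lam J om) X Y = 0"
  shows "chern_ricci_op lam J om X = 0"
proof -
  have ok: "omok om" using om unfolding omherm_def by blast
  have bo: "bilinear om" using ok unfolding omok_def by blast
  have oas: "\<forall>X Y. om X Y = - om Y X" using om unfolding omherm_def by blast
  have pos: "\<forall>X. X \<noteq> 0 \<longrightarrow> om X (J X) > 0" using om unfolding omherm_def by blast
  have nd: "\<And>Z. (\<forall>Y. om Z Y = 0) \<Longrightarrow> Z = 0" using ok unfolding omok_def by blast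
  define D where "D = chern_ricci_op lam J om"
  have lD: "linear D" unfolding D_def by (rule cop_linear[OF ok bl lJ])
  have lp: "linear (phi lam J)" by (rule phi_linear[OF bl lJ])
  have omD: "om (D X) Y = phi lam J (lam X Y)" for X Y unfolding D_def by (rule cop_om[OF ok bl lJ])
  have dl: "lam (D X) Y + lam X (D Y) = D (lam X Y)" for X Y
    using der[rule_format, of X Y] by (simp add: delta_def D_def algebra_simps)
  have lm: "linear (lam Z)" for Z by (rule bil_lin2[OF bl])
  have pinv: "phi lam J (lam (J X) (J Y)) = phi lam J (lam X Y)" for X Y
    using KJ[OF bl as jc, of X Y] Err0[OF lm lm, of "nij lam J"] nj
    by (simp add: J0 tr_def bilinear_lzero[OF bl])
  have DJ: "D (J X) = J (D X)" for X
  proof -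
    have "D (J X) - J (D X) = 0"
      unfolding D_def comm_formula[OF om bl] by (simp add: pinv)
    then show ?thesis by simp
  qed
  have phiD: "phi lam J (D Z) = 0" for Z
  proof -
    have e1: "lam (D Z) = (\<lambda>v. D (lam Z v) - lam Z (D v))" using dl by (auto simp: algebra_simps)
    have e2: "lam (J (D Z)) = (\<lambda>v. D (lam (J Z) v) - lam (J Z) (D v))"
      using dl[of "J Z"] unfolding DJ[symmetric] by (auto simp: algebra_simps)
    have lJD: "linear (\<lambda>x. J (D x))" using linear_compose[OF lD lJ] by (simp add: o_def)
    have "tr (\<lambda>x. J (lam Z (D x))) = tr (\<lambda>x. D (J (lam Z x)))"
      using tr_comm[OF linear_compose[OF lm lJ, unfolded o_def] lD] by simp
    then have "tr (\<lambda>x. J (lam (D Z) x)) = 0"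
      unfolding e1 by (simp add: linear_diff[OF lJ] tr_diff DJ)
    moreover have "tr (lam (J (D Z))) = 0"
      unfolding e2 using tr_comm[OF lD lm, of "J Z"] by (simp add: tr_diff)
    ultimately show ?thesis by (simp add: phi_def)
  qed
  have sa: "om (D X) Y = om X (D Y)" for X Y
    using omD[of X Y] omD[of Y X] oas as linear_neg[OF lp] by metis
  have e: "om (D (D X)) Y = - om (D X) (D Y)" for X Y
  proof -
    have "om (D (D X)) Y = phi lam J (lam (D X) Y)" by (rule omD)
    also have "\<dots> = phi lam J (D (lam X Y)) - phi lam J (lam X (D Y))"
      using dl[of X Y] by (metis add_diff_cancel linear_diff[OF lp])
    also have "\<dots> = - om (D X) (D Y)" by (simp add: phiD omD)
    finally show ?thesis .
  qed
  have DD: "D (D X) = 0" for X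
  proof (rule nd, rule allI)
    fix Y
    have "om (D (D X)) Y = om (D X) (D Y)" by (rule sa)
    then show "om (D (D X)) Y = 0" using e[of X Y] by simp
  qed
  show ?thesis
  proof (rule ccontr)
    assume "chern_ricci_op lam J om X \<noteq> 0"
    then have "D X \<noteq> 0" by (simp add: D_def)
    then have "om (D X) (J (D X)) > 0" using pos by blast
    moreover have "om (D X) (J (D X)) = om X (D (J (D X)))" by (rule sa)
    moreover have "D (J (D X)) = 0" by (simp add: DJ DD J0)
    ultimately show False by (simp add: bilinear_rzero[OF bo])
  qed
qed

end




lemma bl_axis: "bounded_linear (axis i :: 'a::euclidean_space \<Rightarrow> 'a^'n::finite)"
proof (rule bounded_linear_intro[where K=1])
  fix x y :: 'a and r :: real
  show "axis i (x + y) = (axis i x + axis i y :: 'a^'n)" by (simp add: axis_def vec_eq_iff)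
  show "axis i (r *\<^sub>R x) = (r *\<^sub>R axis i x :: 'a^'n)" by (simp add: axis_def vec_eq_iff)
  show "norm (axis i x :: 'a^'n) \<le> norm x * 1" by (simp add: norm_eq_sqrt_inner inner_axis_axis)
qed

lemma vec_sum_axis: "(\<chi> i. w i) = (\<Sum>i\<in>UNIV. axis i (w i) :: 'a::euclidean_space^'n::finite)"
  by (simp add: vec_eq_iff sum_component axis_def)

lemma vec_lambda_vd:
  fixes f :: "real \<Rightarrow> 'n::finite \<Rightarrow> 'a::euclidean_space"
  assumes "\<And>i. ((\<lambda>s. f s i) has_vector_derivative f' i) F"
  shows "((\<lambda>s. \<chi> i. f s i) has_vector_derivative (\<chi> i. f' i)) F"
  unfolding vec_sum_axis
  by (intro has_vector_derivative_sum bounded_linear.has_vector_derivative[OF bl_axis] assms)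

definition enc2 :: "'n::finite brkt \<Rightarrow> real^'n^'n^'n" where
  "enc2 f = (\<chi> i. \<chi> j. f (axis i 1) (axis j 1))"
definition dec2 :: "real^'n^'n^'n \<Rightarrow> 'n::finite brkt" where
  "dec2 v X Y = (\<Sum>i\<in>UNIV. \<Sum>j\<in>UNIV. (X$i * Y$j) *\<^sub>R (v$i$j))"

lemma dec_enc2: assumes "bilinear f" shows "dec2 (enc2 f) = f"
  by (simp add: fun_eq_iff dec2_def enc2_def bil_expand[OF assms, symmetric])

lemma dec2_bil: "bilinear (dec2 v)"
  unfolding bilinear_def dec2_def
  by (auto intro!: linearI simp: sum.distrib scaleR_sum_right algebra_simps scaleR_add_left)

lemma dec2_add: "dec2 (v + w) X Y = dec2 v X Y + dec2 w X Y"
  by (simp add: dec2_def sum.distrib scaleR_add_right)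
lemma dec2_scale: "dec2 (c *\<^sub>R v) X Y = c *\<^sub>R dec2 v X Y"
  by (simp add: dec2_def scaleR_sum_right mult_ac)

lemma enc2_eq0: "enc2 f = 0 \<Longrightarrow> bilinear f \<Longrightarrow> f X Y = 0"
proof -
  assume "enc2 f = 0" "bilinear f"
  then have "f = dec2 0" using dec_enc2 by metis
  then show "f X Y = 0" by (simp add: dec2_def)
qed

lemma enc2_vd:
  assumes "\<And>X Y. ((\<lambda>s. f s X Y) has_vector_derivative f' X Y) F"
  shows "((\<lambda>s. enc2 (f s)) has_vector_derivative enc2 f') F"
  unfolding enc2_def by (intro vec_lambda_vd assms)

lemma enc2_cont:
  assumes "\<And>X Y. ((\<lambda>s. f s X Y) \<longlongrightarrow> f0 X Y) F"
  shows "((\<lambda>s. enc2 (f s)) \<longlongrightarrow> enc2 f0) F"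
  unfolding enc2_def by (intro tendsto_vec_lambda assms)

definition enc3 :: "(real^'n::finite \<Rightarrow> real^'n \<Rightarrow> real^'n \<Rightarrow> real^'n) \<Rightarrow> real^'n^'n^'n^'n" where
  "enc3 f = (\<chi> i. \<chi> j. \<chi> k. f (axis i 1) (axis j 1) (axis k 1))"
definition dec3 :: "real^'n^'n^'n^'n \<Rightarrow> real^'n::finite \<Rightarrow> real^'n \<Rightarrow> real^'n \<Rightarrow> real^'n" where
  "dec3 v X Y Z = (\<Sum>i\<in>UNIV. \<Sum>j\<in>UNIV. \<Sum>k\<in>UNIV. (X$i * Y$j * Z$k) *\<^sub>R (v$i$j$k))"

definition trilin :: "(real^'n::finite \<Rightarrow> real^'n \<Rightarrow> real^'n \<Rightarrow> real^'n) \<Rightarrow> bool" where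
  "trilin f \<longleftrightarrow> (\<forall>Z. bilinear (\<lambda>X Y. f X Y Z)) \<and> (\<forall>X Y. linear (f X Y))"

lemma tri_expand:
  assumes "trilin f"
  shows "f X Y Z = (\<Sum>i\<in>UNIV. \<Sum>j\<in>UNIV. \<Sum>k\<in>UNIV. (X$i * Y$j * Z$k) *\<^sub>R f (axis i 1) (axis j 1) (axis k 1))"
proof -
  have b: "bilinear (\<lambda>X Y. f X Y Z)" for Z using assms by (simp add: trilin_def)
  have l: "linear (f X Y)" for X Y using assms by (simp add: trilin_def)
  have "f X Y Z = (\<Sum>i\<in>UNIV. \<Sum>j\<in>UNIV. (X$i * Y$j) *\<^sub>R f (axis i 1) (axis j 1) Z)"
    using bil_expand[OF b] by blast
  also have "\<dots> = (\<Sum>i\<in>UNIV. \<Sum>j\<in>UNIV. (X$i * Y$j) *\<^sub>R (\<Sum>k\<in>UNIV. Z$k *\<^sub>R f (axis i 1) (axis j 1) (axis k 1)))"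
    by (intro sum.cong refl arg_cong[where f="\<lambda>v. _ *\<^sub>R v"] lin_expand[OF l])
  also have "\<dots> = (\<Sum>i\<in>UNIV. \<Sum>j\<in>UNIV. \<Sum>k\<in>UNIV. (X$i * Y$j * Z$k) *\<^sub>R f (axis i 1) (axis j 1) (axis k 1))"
    by (simp add: scaleR_sum_right mult.assoc)
  finally show ?thesis .
qed

lemma dec_enc3: assumes "trilin f" shows "dec3 (enc3 f) = f"
  by (simp add: fun_eq_iff dec3_def enc3_def tri_expand[OF assms, symmetric])

lemma dec3_tri: "trilin (dec3 v)"
  unfolding trilin_def bilinear_def dec3_def
  by (auto intro!: linearI simp: sum.distrib scaleR_sum_right algebra_simps scaleR_add_left)

lemma dec3_add: "dec3 (v + w) X Y Z = dec3 v X Y Z + dec3 w X Y Z"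
  by (simp add: dec3_def sum.distrib scaleR_add_right)
lemma dec3_scale: "dec3 (c *\<^sub>R v) X Y Z = c *\<^sub>R dec3 v X Y Z"
  by (simp add: dec3_def scaleR_sum_right mult_ac)

lemma enc3_vd:
  assumes "\<And>X Y Z. ((\<lambda>s. f s X Y Z) has_vector_derivative f' X Y Z) F"
  shows "((\<lambda>s. enc3 (f s)) has_vector_derivative enc3 f') F"
  unfolding enc3_def by (intro vec_lambda_vd assms)

lemma enc3_cont:
  assumes "\<And>X Y Z. ((\<lambda>s. f s X Y Z) \<longlongrightarrow> f0 X Y Z) F"
  shows "((\<lambda>s. enc3 (f s)) \<longlongrightarrow> enc3 f0) F"
  unfolding enc3_def by (intro tendsto_vec_lambda assms)




locale flow =
  fixes J :: "real^'n::finite \<Rightarrow> real^'n" and om :: "real^'n \<Rightarrow> real^'n \<Rightarrow> real"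
    and br :: "'n brkt" and S :: "real set" and mu :: "real \<Rightarrow> 'n brkt"
  assumes S: "S = {0..} \<or> S = {..0}"
    and herm: "hermitian_lie_algebra br J om"
    and mu0: "mu 0 = br"
    and bil: "\<forall>t\<in>S. bilinear (mu t)"
    and der: "\<forall>t\<in>S. \<forall>X Y. ((\<lambda>s. mu s X Y) has_vector_derivative
                   delta (mu t) (chern_ricci_op (mu t) J om) X Y) (at t within S)"
begin

abbreviation P where "P t \<equiv> chern_ricci_op (mu t) J om"

lemma cplxJ: "cplx J" using herm unfolding hermitian_lie_algebra_def cplx_def by blast

sublocale cplx J by (rule cplxJ)

lemma omh: "omherm om J"
  using herm unfolding hermitian_lie_algebra_def omherm_def omok_def by blast
lemma ok: "omok om" using omh unfolding omherm_def by blast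

lemma S0: "0 \<in> S" using S by auto

lemma bilt: "t \<in> S \<Longrightarrow> bilinear (mu t)" using bil by blast

lemma ev_bil: "eventually (\<lambda>s. bilinear (mu s)) (at t within S)"
  using bil by (auto simp: eventually_at_filter)

lemma ev_S: "eventually (\<lambda>s. s \<in> S) (at t within S)"
  by (auto simp: eventually_at_filter)

lemma dert: "t \<in> S \<Longrightarrow> ((\<lambda>s. mu s X Y) has_vector_derivative delta (mu t) (P t) X Y) (at t within S)"
  using der by blast

lemma mu_lim: "t \<in> S \<Longrightarrow> ((\<lambda>s. mu s X Y) \<longlongrightarrow> mu t X Y) (at t within S)"
  using has_vector_derivative_continuous[OF dert] by (simp add: continuous_within)

lemma P_lim: "t \<in> S \<Longrightarrow> (z \<longlongrightarrow> z0) (at t within S) \<Longrightarrow> ((\<lambda>s. P s (z s)) \<longlongrightarrow> P t z0) (at t within S)"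
  by (rule lim_cop[OF ev_bil mu_lim bilt lJ ok])

lemma mub_lim: "t \<in> S \<Longrightarrow> (a \<longlongrightarrow> a0) (at t within S) \<Longrightarrow> (b \<longlongrightarrow> b0) (at t within S) \<Longrightarrow>
    ((\<lambda>s. mu s (a s) (b s)) \<longlongrightarrow> mu t a0 b0) (at t within S)"
  by (rule lim_bil[OF ev_bil mu_lim bilt])

lemma lP: "t \<in> S \<Longrightarrow> linear (P t)" by (rule cop_linear[OF ok bilt lJ])

lemma delta_bil: assumes b: "bilinear mu'" and l: "linear A" shows "bilinear (delta mu' A)"
proof -
  note B = bilinear_ladd[OF b] bilinear_radd[OF b] bilinear_lmul[OF b] bilinear_rmul[OF b]
  note L = linear_add[OF l] linear_scale[OF l]
  show ?thesis unfolding bilinear_def delta_def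
    by (intro allI conjI linearI) (simp_all add: B L algebra_simps)
qed

lemma bilD: "t \<in> S \<Longrightarrow> bilinear (delta (mu t) (P t))"
  by (rule delta_bil[OF bilt lP])

lemma cont_on: "(\<And>t. t \<in> S \<Longrightarrow> (f \<longlongrightarrow> f t) (at t within S)) \<Longrightarrow> continuous_on S f"
  by (simp add: continuous_on_def)

lemma der_mu2:
  assumes t: "t \<in> S" and db: "(b has_vector_derivative b') (at t within S)"
  shows "((\<lambda>s. mu s X (b s)) has_vector_derivative (mu t X b' + delta (mu t) (P t) X (b t))) (at t within S)"
proof -
  have "((\<lambda>s. \<Sum>k\<in>UNIV. b s $ k *\<^sub>R mu s X (axis k 1)) has_vector_derivative
      (\<Sum>k\<in>UNIV. b t $ k *\<^sub>R delta (mu t) (P t) X (axis k 1) + b' $ k *\<^sub>R mu t X (axis k 1))) (at t within S)"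
    by (intro has_vector_derivative_sum has_vector_derivative_scaleR dert[OF t]
        has_real_derivative_iff_has_vector_derivative[THEN iffD2]
        bounded_linear.has_vector_derivative[OF bounded_linear_vec_nth db])
  moreover have "(\<Sum>k\<in>UNIV. b t $ k *\<^sub>R delta (mu t) (P t) X (axis k 1) + b' $ k *\<^sub>R mu t X (axis k 1))
     = mu t X b' + delta (mu t) (P t) X (b t)"
    by (simp add: sum.distrib lin_expand[OF bil_lin2[OF bilD[OF t]], symmetric] lin_expand[OF bil_lin2[OF bilt[OF t]], symmetric])
  moreover have "\<And>s. s \<in> S \<Longrightarrow> mu s X (b s) = (\<Sum>k\<in>UNIV. b s $ k *\<^sub>R mu s X (axis k 1))"
    by (rule lin_expand[OF bil_lin2[OF bilt]])
  ultimately show ?thesis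
    by (metis (no_types, lifting) has_vector_derivative_transform t)
qed

end




lemma enc2_linI:
  assumes "\<And>v w X Y. G (v + w) X Y = G v X Y + G w X Y" "\<And>c v X Y. G (c *\<^sub>R v) X Y = c *\<^sub>R G v X Y"
  shows "linear (\<lambda>v. enc2 (G v))"
  by (rule linearI) (simp_all add: enc2_def vec_eq_iff assms)

lemma enc3_linI:
  assumes "\<And>v w X Y Z. G (v + w) X Y Z = G v X Y Z + G w X Y Z" "\<And>c v X Y Z. G (c *\<^sub>R v) X Y Z = c *\<^sub>R G v X Y Z"
  shows "linear (\<lambda>v. enc3 (G v))"
  by (rule linearI) (simp_all add: enc3_def vec_eq_iff assms)

lemma const_bil_lim: "bilinear (f :: 'n::finite brkt) \<Longrightarrow> (a \<longlongrightarrow> a0) F \<Longrightarrow> (b \<longlongrightarrow> b0) F \<Longrightarrow> ((\<lambda>s. f (a s) (b s)) \<longlongrightarrow> f a0 b0) F"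
  by (rule lim_bil[where mu="\<lambda>_. f"]) auto

context flow
begin

lemma antisym_pres: "t \<in> S \<Longrightarrow> mu t X Y = - mu t Y X"
proof -
  define x where "x s = enc2 (\<lambda>X Y. mu s X Y + mu s Y X)" for s
  define G where "G t n X Y = n (P t X) Y + n X (P t Y) - P t (n X Y)" for t and n :: "'n brkt" and X Y
  define L where "L t v = enc2 (G t (dec2 v))" for t v
  have sb: "bilinear (\<lambda>X Y. mu s X Y + mu s Y X)" if "s \<in> S" for s
  proof -
    note b = bilt[OF that]
    note B = bilinear_ladd[OF b] bilinear_radd[OF b] bilinear_lmul[OF b] bilinear_rmul[OF b]
    show ?thesis unfolding bilinear_def
      by (intro allI conjI linearI) (simp_all add: B algebra_simps)
  qed
  have "\<forall>t\<in>S. x t = 0"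
  proof (rule gronwall_S[OF S, where L = L])
    have brs: "\<forall>X Y. br X Y = - br Y X" using herm unfolding hermitian_lie_algebra_def lie_bracket_def by blast
    have "br X Y + br Y X = 0" for X Y using brs[rule_format, of X Y] by simp
    then show "x 0 = 0" by (simp add: x_def enc2_def vec_eq_iff mu0)
    show "\<forall>t\<in>S. (x has_vector_derivative L t (x t)) (at t within S)"
    proof
      fix t assume t: "t \<in> S"
      have "(x has_vector_derivative enc2 (\<lambda>X Y. delta (mu t) (P t) X Y + delta (mu t) (P t) Y X)) (at t within S)"
        unfolding x_def by (intro enc2_vd has_vector_derivative_add dert t)
      moreover have "enc2 (\<lambda>X Y. delta (mu t) (P t) X Y + delta (mu t) (P t) Y X) = L t (x t)"
        unfolding L_def x_def dec_enc2[OF sb[OF t]] G_def delta_def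
        by (simp add: algebra_simps linear_add[OF lP[OF t]])
      ultimately show "(x has_vector_derivative L t (x t)) (at t within S)" by simp
    qed
    show "\<forall>t\<in>S. linear (L t)"
    proof
      fix t assume t: "t \<in> S"
      show "linear (L t)" unfolding L_def
        by (rule enc2_linI) (simp_all add: G_def dec2_add dec2_scale linear_add[OF lP[OF t]] linear_scale[OF lP[OF t]] algebra_simps)
    qed
    show "\<forall>v. continuous_on S (\<lambda>t. L t v)"
    proof
      fix v
      show "continuous_on S (\<lambda>t. L t v)"
      proof (rule cont_on)
        fix t assume t: "t \<in> S"
        show "((\<lambda>t. L t v) \<longlongrightarrow> L t v) (at t within S)"
          unfolding L_def G_def
          by (intro enc2_cont tendsto_intros const_bil_lim[OF dec2_bil] P_lim t tendsto_const)
      qed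
    qed
  qed
  moreover assume "t \<in> S"
  ultimately have "x t = 0" by blast
  then have "mu t X Y + mu t Y X = 0" using enc2_eq0 sb[OF \<open>t \<in> S\<close>] unfolding x_def by blast
  then show ?thesis by (simp add: eq_neg_iff_add_eq_0)
qed


lemma jac_tri: "t \<in> S \<Longrightarrow> trilin (jac (mu t))"
proof -
  assume t: "t \<in> S"
  note b = bilt[OF t]
  note B = bilinear_ladd[OF b] bilinear_radd[OF b] bilinear_lmul[OF b] bilinear_rmul[OF b]
  show ?thesis unfolding trilin_def bilinear_def jac_def
    by (intro allI conjI linearI) (simp_all add: B algebra_simps)
qed

lemma jac_pres: "t \<in> S \<Longrightarrow> jac (mu t) X Y Z = 0"
proof -
  define x where "x s = enc3 (jac (mu s))" for s
  define G where "G t j X Y Z = j (P t X) Y Z + j X (P t Y) Z + j X Y (P t Z) - P t (j X Y Z)"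
    for t and j :: "real^'n \<Rightarrow> real^'n \<Rightarrow> real^'n \<Rightarrow> real^'n" and X Y Z
  define L where "L t v = enc3 (G t (dec3 v))" for t v
  have "\<forall>t\<in>S. x t = 0"
  proof (rule gronwall_S[OF S, where L = L])
    have brs: "\<forall>X Y Z. jac br X Y Z = 0" using herm unfolding hermitian_lie_algebra_def lie_bracket_def jac_def by blast
    then show "x 0 = 0" by (simp add: x_def enc3_def vec_eq_iff mu0)
    show "\<forall>t\<in>S. (x has_vector_derivative L t (x t)) (at t within S)"
    proof
      fix t assume t: "t \<in> S"
      let ?D = "delta (mu t) (P t)"
      have "(x has_vector_derivative enc3 (\<lambda>X Y Z. (mu t X (?D Y Z) + ?D X (mu t Y Z))
          + (mu t Y (?D Z X) + ?D Y (mu t Z X)) + (mu t Z (?D X Y) + ?D Z (mu t X Y)))) (at t within S)"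
        unfolding x_def jac_def by (intro enc3_vd has_vector_derivative_add der_mu2 dert t)
      moreover have "enc3 (\<lambda>X Y Z. (mu t X (?D Y Z) + ?D X (mu t Y Z))
          + (mu t Y (?D Z X) + ?D Y (mu t Z X)) + (mu t Z (?D X Y) + ?D Z (mu t X Y))) = L t (x t)"
      proof -
        note b = bilt[OF t]
        note B = bilinear_ladd[OF b] bilinear_radd[OF b] bilinear_lsub[OF b] bilinear_rsub[OF b]
        note LL = linear_add[OF lP[OF t]] linear_diff[OF lP[OF t]]
        show ?thesis
          unfolding L_def x_def dec_enc3[OF jac_tri[OF t]] G_def delta_def jac_def
          by (simp add: B LL algebra_simps)
      qed
      ultimately show "(x has_vector_derivative L t (x t)) (at t within S)" by simp
    qed
    show "\<forall>t\<in>S. linear (L t)"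
    proof
      fix t assume t: "t \<in> S"
      show "linear (L t)" unfolding L_def
        by (rule enc3_linI) (simp_all add: G_def dec3_add dec3_scale linear_add[OF lP[OF t]] linear_scale[OF lP[OF t]] algebra_simps)
    qed
    show "\<forall>v. continuous_on S (\<lambda>t. L t v)"
    proof
      fix v
      show "continuous_on S (\<lambda>t. L t v)"
      proof (rule cont_on)
        fix t assume t: "t \<in> S"
        show "((\<lambda>t. L t v) \<longlongrightarrow> L t v) (at t within S)"
          unfolding L_def G_def dec3_def
          by (intro enc3_cont tendsto_intros P_lim t tendsto_const)
      qed
    qed
  qed
  moreover assume t: "t \<in> S"
  ultimately have "x t = 0" by blast
  then have "dec3 (x t) X Y Z = 0" by (simp add: dec3_def)
  then show ?thesis unfolding x_def dec_enc3[OF jac_tri[OF t]] .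
qed

end




definition Corr :: "'n::finite brkt \<Rightarrow> (real^'n \<Rightarrow> real^'n) \<Rightarrow> (real^'n \<Rightarrow> real^'n) \<Rightarrow> 'n brkt" where
  "Corr m J C X Y = m (C X) (J Y) + m (J X) (C Y) - J (m (C X) Y) - J (m X (C Y)) - C (m (J X) Y) - C (m X (J Y))"

context cplx
begin

lemma nij_bil: assumes b: "bilinear m" shows "bilinear (nij m J)"
proof -
  note B = bilinear_ladd[OF b] bilinear_radd[OF b] bilinear_lmul[OF b] bilinear_rmul[OF b]
  show ?thesis unfolding bilinear_def nij_def
    by (intro allI conjI linearI) (simp_all add: B Jsimps algebra_simps)
qed

lemma nij_delta:
  assumes b: "bilinear m" and l: "linear A"
  shows "nij (delta m A) J X Y = delta (nij m J) A X Y + Corr m J (\<lambda>X. A (J X) - J (A X)) X Y"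
proof -
  note B = bilinear_ladd[OF b] bilinear_radd[OF b] bilinear_lsub[OF b] bilinear_rsub[OF b]
  note LL = linear_add[OF l] linear_diff[OF l]
  show ?thesis unfolding nij_def delta_def Corr_def
    by (simp add: B LL Jsimps algebra_simps)
qed

lemma TT_scale1: "linear g \<Longrightarrow> TT J (\<lambda>x. c *\<^sub>R f x) g = c * TT J f g"
  unfolding TT_def by (simp add: linear_scale Jsimps tr_scale[symmetric] algebra_simps)
lemma TT_scale2: "linear f \<Longrightarrow> TT J f (\<lambda>x. c *\<^sub>R g x) = c * TT J f g"
  unfolding TT_def by (simp add: linear_scale Jsimps tr_scale[symmetric] algebra_simps)

lemma Corr_add:
  assumes b: "bilinear m" and C: "\<And>X. C X = C1 X + C2 X"
  shows "Corr m J C X Y = Corr m J C1 X Y + Corr m J C2 X Y"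
  unfolding Corr_def C using b by (simp add: bilinear_ladd bilinear_radd Jsimps algebra_simps)

lemma Corr_scale:
  assumes b: "bilinear m" and C: "\<And>X. C X = c *\<^sub>R C1 X"
  shows "Corr m J C X Y = c *\<^sub>R Corr m J C1 X Y"
  unfolding Corr_def C using b by (simp add: bilinear_lmul bilinear_rmul Jsimps algebra_simps)

end

context flow
begin

abbreviation N where "N s \<equiv> nij (mu s) J"

definition Errp where
  "Errp t n X Z = TT J (\<lambda>v. J (am J (mu t X) v)) (SS n J Z) + TT J (SS n J X) (\<lambda>v. J (am J (mu t Z) v))
     + TT J (SS (N t) J X) (SS n J Z)"

definition Dn where "Dn t n X Z = -(1/2) * Errp t n X Z + (1/2) * tr (mu t (J (n X Z)))"

definition Cn where "Cn t n X = (\<Sum>j\<in>UNIV. Dn t n X (- J (axis j 1)) *\<^sub>R dualb om j)"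

definition GN where "GN t n X Y = delta n (P t) X Y + Corr (mu t) J (Cn t n) X Y"

lemma comm_Cn:
  assumes t: "t \<in> S"
  shows "P t (J X) - J (P t X) = Cn t (N t) X"
proof -
  have as: "\<forall>X Y. mu t X Y = - mu t Y X" using antisym_pres[OF t] by blast
  have jc: "\<forall>X Y Z. jac (mu t) X Y Z = 0" using jac_pres[OF t] by blast
  show ?thesis
    unfolding comm_formula[OF omh bilt[OF t]] Cn_def Dn_def
    using KJ[OF bilt[OF t] as jc] by (simp add: Errp_def Err_def JJ)
qed

end




context flow
begin

lemma lJA: "linear m \<Longrightarrow> linear (\<lambda>v. J (am J m v))"
  using linear_compose[OF lin_am lJ] by (simp add: o_def)

lemma SS_add: "SS (dec2 (v + w)) J Z = (\<lambda>u. SS (dec2 v) J Z u + SS (dec2 w) J Z u)"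
  by (simp add: fun_eq_iff SS_def dec2_add algebra_simps)
lemma SS_scale: "SS (dec2 (c *\<^sub>R v)) J Z = (\<lambda>u. c *\<^sub>R SS (dec2 v) J Z u)"
  by (simp add: fun_eq_iff SS_def dec2_scale algebra_simps)
lemma SSd_lin: "linear (SS (dec2 v) J Z)" by (rule SS_lin, rule bil_lin2[OF dec2_bil])

lemma mJ_add: "t \<in> S \<Longrightarrow> mu t (J (a + b)) = (\<lambda>u. mu t (J a) u + mu t (J b) u)"
  by (simp add: fun_eq_iff Jsimps bilinear_ladd[OF bilt])
lemma mJ_scale: "t \<in> S \<Longrightarrow> mu t (J (c *\<^sub>R a)) = (\<lambda>u. c *\<^sub>R mu t (J a) u)"
  by (simp add: fun_eq_iff Jsimps bilinear_lmul[OF bilt])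

lemma Errp_add: "t \<in> S \<Longrightarrow> Errp t (dec2 (v + w)) X Z = Errp t (dec2 v) X Z + Errp t (dec2 w) X Z"
  unfolding Errp_def SS_add
  by (simp add: TT_add1 TT_add2 lJA bil_lin2[OF bilt] SSd_lin SS_lin nij_lin2[OF bilt] linear_compose_add)

lemma Errp_scale: "t \<in> S \<Longrightarrow> Errp t (dec2 (c *\<^sub>R v)) X Z = c * Errp t (dec2 v) X Z"
  unfolding Errp_def SS_scale
  by (simp add: TT_scale1 TT_scale2 lJA bil_lin2[OF bilt] SSd_lin SS_lin nij_lin2[OF bilt] algebra_simps)

lemma Dn_add: "t \<in> S \<Longrightarrow> Dn t (dec2 (v + w)) X Z = Dn t (dec2 v) X Z + Dn t (dec2 w) X Z"
  unfolding Dn_def by (simp add: Errp_add dec2_add mJ_add tr_add algebra_simps)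
lemma Dn_scale: "t \<in> S \<Longrightarrow> Dn t (dec2 (c *\<^sub>R v)) X Z = c * Dn t (dec2 v) X Z"
  unfolding Dn_def by (simp add: Errp_scale dec2_scale mJ_scale tr_scale algebra_simps)

lemma Cn_add: "t \<in> S \<Longrightarrow> Cn t (dec2 (v + w)) X = Cn t (dec2 v) X + Cn t (dec2 w) X"
  unfolding Cn_def by (simp add: Dn_add scaleR_add_left sum.distrib)
lemma Cn_scale: "t \<in> S \<Longrightarrow> Cn t (dec2 (c *\<^sub>R v)) X = c *\<^sub>R Cn t (dec2 v) X"
  unfolding Cn_def by (simp add: Dn_scale scaleR_sum_right)

lemma GN_add: "t \<in> S \<Longrightarrow> GN t (dec2 (v + w)) X Y = GN t (dec2 v) X Y + GN t (dec2 w) X Y"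
  unfolding GN_def
  by (simp add: Corr_add[OF bilt Cn_add] delta_def dec2_add linear_add[OF lP] algebra_simps)
lemma GN_scale: "t \<in> S \<Longrightarrow> GN t (dec2 (c *\<^sub>R v)) X Y = c *\<^sub>R GN t (dec2 v) X Y"
  unfolding GN_def
  by (simp add: Corr_scale[OF bilt Cn_scale] delta_def dec2_scale linear_scale[OF lP] algebra_simps)

end




context flow
begin

lemma lim_Errp:
  assumes t: "t \<in> S" and a: "(a \<longlongrightarrow> a0) (at t within S)"
  shows "((\<lambda>s. Errp s (dec2 v) (a s) Z) \<longlongrightarrow> Errp t (dec2 v) a0 Z) (at t within S)"
  unfolding Errp_def TT_def am_def SS_def nij_def
  by (intro tendsto_intros lim_tr lim_linJ[OF lJ] mub_lim[OF t] const_bil_lim[OF dec2_bil] tendsto_const a)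


lemma lim_Dn:
  assumes t: "t \<in> S" and a: "(a \<longlongrightarrow> a0) (at t within S)"
  shows "((\<lambda>s. Dn s (dec2 v) (a s) Z) \<longlongrightarrow> Dn t (dec2 v) a0 Z) (at t within S)"
  unfolding Dn_def
  by (intro tendsto_intros lim_Errp[OF t a] lim_tr lim_linJ[OF lJ] mub_lim[OF t] const_bil_lim[OF dec2_bil] tendsto_const a)

lemma lim_Cn:
  assumes t: "t \<in> S" and a: "(a \<longlongrightarrow> a0) (at t within S)"
  shows "((\<lambda>s. Cn s (dec2 v) (a s)) \<longlongrightarrow> Cn t (dec2 v) a0) (at t within S)"
  unfolding Cn_def by (intro tendsto_intros lim_Dn[OF t a])

lemma lim_GN:
  assumes t: "t \<in> S"
  shows "((\<lambda>s. GN s (dec2 v) X Y) \<longlongrightarrow> GN t (dec2 v) X Y) (at t within S)"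
  unfolding GN_def delta_def Corr_def
  by (intro tendsto_intros lim_Cn[OF t] P_lim[OF t] lim_linJ[OF lJ] mub_lim[OF t] const_bil_lim[OF dec2_bil] tendsto_const)

lemma blJ: "bounded_linear J" using lJ by (simp add: linear_conv_bounded_linear)

lemma nij_pres: "t \<in> S \<Longrightarrow> nij (mu t) J X Y = 0"
proof -
  define x where "x s = enc2 (N s)" for s
  define L where "L t v = enc2 (GN t (dec2 v))" for t v
  have "\<forall>t\<in>S. x t = 0"
  proof (rule gronwall_S[OF S, where L = L])
    have "nij br J X Y = 0" for X Y using herm unfolding hermitian_lie_algebra_def nij_def by auto
    then show "x 0 = 0" by (simp add: x_def enc2_def vec_eq_iff mu0)
    show "\<forall>t\<in>S. (x has_vector_derivative L t (x t)) (at t within S)"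
    proof
      fix t assume t: "t \<in> S"
      have "(x has_vector_derivative enc2 (nij (delta (mu t) (P t)) J)) (at t within S)"
        unfolding x_def nij_def
        by (intro enc2_vd has_vector_derivative_diff dert t bounded_linear.has_vector_derivative[OF blJ])
      moreover have "enc2 (nij (delta (mu t) (P t)) J) = L t (x t)"
      proof -
        have ceq: "(\<lambda>X. P t (J X) - J (P t X)) = Cn t (N t)" using comm_Cn[OF t] by (simp add: fun_eq_iff)
        have "nij (delta (mu t) (P t)) J = GN t (N t)"
          by (intro ext) (simp only: nij_delta[OF bilt[OF t] lP[OF t]] GN_def ceq)
        then show ?thesis
          unfolding L_def x_def dec_enc2[OF nij_bil[OF bilt[OF t]]] by simp
      qed
      ultimately show "(x has_vector_derivative L t (x t)) (at t within S)" by simp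
    qed
    show "\<forall>t\<in>S. linear (L t)"
    proof
      fix t assume t: "t \<in> S"
      show "linear (L t)" unfolding L_def
        by (rule enc2_linI) (simp_all add: GN_add[OF t] GN_scale[OF t])
    qed
    show "\<forall>v. continuous_on S (\<lambda>t. L t v)"
    proof
      fix v
      show "continuous_on S (\<lambda>t. L t v)"
      proof (rule cont_on)
        fix t assume t: "t \<in> S"
        show "((\<lambda>t. L t v) \<longlongrightarrow> L t v) (at t within S)"
          unfolding L_def by (intro enc2_cont lim_GN t)
      qed
    qed
  qed
  moreover assume t: "t \<in> S"
  ultimately have "x t = 0" by blast
  then show ?thesis using enc2_eq0 nij_bil[OF bilt[OF t]] unfolding x_def by blast
qed

end




context flow
begin

lemma final_flow:
  assumes Fb: "F \<noteq> bot" and FS: "eventually (\<lambda>t. t \<in> S) F"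
    and conv: "\<forall>X Y. ((\<lambda>t. mu t X Y) \<longlongrightarrow> lam X Y) F"
    and dlim: "\<And>f g c l. (\<forall>t\<in>S. (f has_real_derivative g t) (at t within S)) \<Longrightarrow> (g \<longlongrightarrow> c) F \<Longrightarrow> (f \<longlongrightarrow> l) F \<Longrightarrow> c = 0"
  shows "chern_ricci_op lam J om X = 0"
proof -
  have ev: "eventually (\<lambda>t. bilinear (mu t)) F" using FS by (auto elim!: eventually_mono intro: bilt)
  have cv: "\<And>X Y. ((\<lambda>t. mu t X Y) \<longlongrightarrow> lam X Y) F" using conv by blast
  have bl: "bilinear lam" by (rule lim_bilinear[OF Fb ev cv])
  have lim0: "f0 = 0" if "(f \<longlongrightarrow> f0) F" "eventually (\<lambda>t. f t = 0) F" for f :: "real \<Rightarrow> real^'n" and f0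
    using tendsto_unique[OF Fb that(1)] tendsto_eventually[OF that(2)] by metis
  have as: "\<forall>X Y. lam X Y = - lam Y X"
  proof (intro allI)
    fix X Y
    have "((\<lambda>t. mu t X Y + mu t Y X) \<longlongrightarrow> lam X Y + lam Y X) F" by (intro tendsto_intros cv)
    moreover have "eventually (\<lambda>t. mu t X Y + mu t Y X = 0) F"
      using FS by (auto elim!: eventually_mono simp: antisym_pres[of _ X Y])
    ultimately have "lam X Y + lam Y X = 0" by (rule lim0)
    then show "lam X Y = - lam Y X" by (simp add: eq_neg_iff_add_eq_0)
  qed
  have jc: "\<forall>X Y Z. jac lam X Y Z = 0"
  proof (intro allI)
    fix X Y Z
    have "((\<lambda>t. jac (mu t) X Y Z) \<longlongrightarrow> jac lam X Y Z) F"
      unfolding jac_def by (intro tendsto_intros lim_bil[OF ev cv bl] cv tendsto_const)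
    moreover have "eventually (\<lambda>t. jac (mu t) X Y Z = 0) F"
      using FS by (auto elim!: eventually_mono dest: jac_pres)
    ultimately show "jac lam X Y Z = 0" by (rule lim0)
  qed
  have nj: "\<forall>X Y. nij lam J X Y = 0"
  proof (intro allI)
    fix X Y
    have "((\<lambda>t. nij (mu t) J X Y) \<longlongrightarrow> nij lam J X Y) F"
      unfolding nij_def by (intro tendsto_intros lim_linJ[OF lJ] cv)
    moreover have "eventually (\<lambda>t. nij (mu t) J X Y = 0) F"
      using FS by (auto elim!: eventually_mono dest: nij_pres)
    ultimately show "nij lam J X Y = 0" by (rule lim0)
  qed
  have dr: "\<forall>X Y. delta lam (chern_ricci_op lam J om) X Y = 0"
  proof (intro allI)
    fix X Y
    have gl: "((\<lambda>t. delta (mu t) (P t) X Y) \<longlongrightarrow> delta lam (chern_ricci_op lam J om) X Y) F"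
      unfolding delta_def
      by (intro tendsto_intros lim_bil[OF ev cv bl] lim_cop[OF ev cv bl lJ ok] cv tendsto_const)
    have "delta lam (chern_ricci_op lam J om) X Y $ k = 0" for k
    proof (rule dlim)
      show "\<forall>t\<in>S. ((\<lambda>t. mu t X Y $ k) has_real_derivative delta (mu t) (P t) X Y $ k) (at t within S)"
        unfolding has_real_derivative_iff_has_vector_derivative
      proof
        fix t assume t: "t \<in> S"
        show "((\<lambda>t. mu t X Y $ k) has_vector_derivative delta (mu t) (P t) X Y $ k) (at t within S)"
          using bounded_linear.has_vector_derivative[OF bounded_linear_vec_nth dert[OF t, of X Y], of k] by simp
      qed
      show "((\<lambda>t. delta (mu t) (P t) X Y $ k) \<longlongrightarrow> delta lam (chern_ricci_op lam J om) X Y $ k) F"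
        by (intro tendsto_vec_nth gl)
      show "((\<lambda>t. mu t X Y $ k) \<longlongrightarrow> lam X Y $ k) F" by (intro tendsto_vec_nth cv)
    qed
    then show "delta lam (chern_ricci_op lam J om) X Y = 0" by (simp add: vec_eq_iff)
  qed
  show ?thesis by (rule final_alg[OF omh bl as jc nj dr])
qed

end



theorem lemma5p2:
  fixes br lam :: "'n::finite brkt"
    and J :: "real^'n \<Rightarrow> real^'n"
    and om :: "real^'n \<Rightarrow> real^'n \<Rightarrow> real"
    and mu :: "real \<Rightarrow> 'n brkt"
  assumes herm: "hermitian_lie_algebra br J om"
  shows
   "((mu 0 = br \<and> (\<forall>t\<ge>0. bilinear (mu t)) \<and>
      (\<forall>t\<ge>0. \<forall>X Y. ((\<lambda>s. mu s X Y) has_vector_derivative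
                   delta (mu t) (chern_ricci_op (mu t) J om) X Y) (at t within {0..})) \<and>
      (\<forall>X Y. ((\<lambda>t. mu t X Y) \<longlongrightarrow> lam X Y) at_top))
     \<longrightarrow> (\<forall>X. chern_ricci_op lam J om X = 0))
  \<and> ((mu 0 = br \<and> (\<forall>t\<le>0. bilinear (mu t)) \<and>
      (\<forall>t\<le>0. \<forall>X Y. ((\<lambda>s. mu s X Y) has_vector_derivative
                   delta (mu t) (chern_ricci_op (mu t) J om) X Y) (at t within {..0})) \<and>
      (\<forall>X Y. ((\<lambda>t. mu t X Y) \<longlongrightarrow> lam X Y) at_bot))
     \<longrightarrow> (\<forall>X. chern_ricci_op lam J om X = 0))"
proof (intro conjI impI allI)
  fix X
  assume H: "mu 0 = br \<and> (\<forall>t\<ge>0. bilinear (mu t)) \<and>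
      (\<forall>t\<ge>0. \<forall>X Y. ((\<lambda>s. mu s X Y) has_vector_derivative
                   delta (mu t) (chern_ricci_op (mu t) J om) X Y) (at t within {0..})) \<and>
      (\<forall>X Y. ((\<lambda>t. mu t X Y) \<longlongrightarrow> lam X Y) at_top)"
  interpret fl: flow J om br "{0..}" mu
    by unfold_locales (use herm H in auto)
  show "chern_ricci_op lam J om X = 0"
  proof (rule fl.final_flow[where F = at_top])
    show "(at_top :: real filter) \<noteq> bot" by simp
    show "eventually (\<lambda>t. t \<in> {0::real..}) at_top" by (simp add: eventually_ge_at_top)
    show "\<forall>X Y. ((\<lambda>t. mu t X Y) \<longlongrightarrow> lam X Y) at_top" using H by blast
    fix f g :: "real \<Rightarrow> real" and c l
    assume "\<forall>t\<in>{0..}. (f has_real_derivative g t) (at t within {0..})" "(g \<longlongrightarrow> c) at_top" "(f \<longlongrightarrow> l) at_top"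
    then show "c = 0" by (intro deriv_lim_top[of f g c l]) auto
  qed
next
  fix X
  assume H: "mu 0 = br \<and> (\<forall>t\<le>0. bilinear (mu t)) \<and>
      (\<forall>t\<le>0. \<forall>X Y. ((\<lambda>s. mu s X Y) has_vector_derivative
                   delta (mu t) (chern_ricci_op (mu t) J om) X Y) (at t within {..0})) \<and>
      (\<forall>X Y. ((\<lambda>t. mu t X Y) \<longlongrightarrow> lam X Y) at_bot)"
  interpret fl: flow J om br "{..0}" mu
    by unfold_locales (use herm H in auto)
  show "chern_ricci_op lam J om X = 0"
  proof (rule fl.final_flow[where F = at_bot])
    show "(at_bot :: real filter) \<noteq> bot" by simp
    show "eventually (\<lambda>t. t \<in> {..0::real}) at_bot" by (simp add: eventually_le_at_bot)
    show "\<forall>X Y. ((\<lambda>t. mu t X Y) \<longlongrightarrow> lam X Y) at_bot" using H by blast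
    fix f g :: "real \<Rightarrow> real" and c l
    assume "\<forall>t\<in>{..0}. (f has_real_derivative g t) (at t within {..0})" "(g \<longlongrightarrow> c) at_bot" "(f \<longlongrightarrow> l) at_bot"
    then show "c = 0" by (intro deriv_lim_bot[of f g c l]) auto
  qed
qed

end
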